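(* Let $T$ be a CPTP map with operator-sum representation $\{M_k\}$, $\mathcal{H}_S$ an invariant subspace for which the DID construction terminates successfully, yielding $\mathcal{H}=\mathcal{H}_S\oplus\mathcal{H}_{T_1}\oplus\cdots\oplus\mathcal{H}_{T_N}$, and set $\mathcal{H}_{T_0}:=\mathcal{H}_S$. For $i=1,\dots,N$ let $\Pi_{T_j}$ be the orthogonal projection onto $\mathcal{H}_{T_j}$, $M_{k,P_i}=\Pi_{T_{i-1}}M_k|_{\mathcal{H}_{T_i}}:\mathcal{H}_{T_i}\to\mathcal{H}_{T_{i-1}}$, and $G_i=\sum_kM_{k,P_i}^\dagger M_{k,P_i}$, an operator on $\mathcal{H}_{T_i}$. Then $G_i$ is positive definite on $\mathcal{H}_{T_i}$, and for every density operator $\rho$ with $\Pi_{T_i}\rho\Pi_{T_i}=\rho$, $$\lambda_{\min}(G_i)\le \mathrm{Tr}(\Pi_{T_{i-1}}T(\rho))\le\lambda_{\max}(G_i)\le1,$$ where both bounds are attained by some such density operator.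
   Context: $\mathcal{H}$ is a finite-dimensional complex Hilbert space; $T$ is CPTP: $T(\rho)=\sum_kM_k\rho M_k^\dagger$, $\sum_kM_k^\dagger M_k=I$. A subspace $\mathcal{H}_S$ is invariant if $\rho\ge0$, $\mathrm{supp}(\rho)\subseteq\mathcal{H}_S$ implies $\mathrm{supp}(T(\rho))\subseteq\mathcal{H}_S$. DID construction: set $\mathcal{H}_{S_1}=\mathcal{H}_S$, $\mathcal{H}_{R_1}=\mathcal{H}_S^\perp$. At step $i$, let $M_{k,P'_i}=\Pi_{S_i}M_k|_{\mathcal{H}_{R_i}}:\mathcal{H}_{R_i}\to\mathcal{H}_{S_i}$ and $\mathcal{H}_{R_{i+1}}=\bigcap_k\ker(M_{k,P'_i})$. (1) If $\mathcal{H}_{R_{i+1}}=\mathcal{H}_{R_i}$, set $\mathcal{H}_{T_i}=\mathcal{H}_{R_i}$, stop (unsuccessful). (2) If $\mathcal{H}_{R_{i+1}}=\{0\}$, set $\mathcal{H}_{T_i}=\mathcal{H}_{R_i}$, stop (successful). (3) Otherwise $\mathcal{H}_{T_i}$ is the orthogonal complement of $\mathcal{H}_{R_{i+1}}$ in $\mathcal{H}_{R_i}$, $\mathcal{H}_{S_{i+1}}=\mathcal{H}_{S_i}\oplus\mathcal{H}_{T_i}$, iterate. $\lambda_{\min},\lambda_{\max}$ denote the least and largest eigenvalues. *)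

theory Defs
  imports "Jordan_Normal_Form.Matrix"
begin

definition cinner :: "complex vec \<Rightarrow> complex vec \<Rightarrow> complex" where
  "cinner u v = (\<Sum>i<dim_vec u. cnj (u $ i) * v $ i)"

definition adj :: "complex mat \<Rightarrow> complex mat" where
  "adj A = mat (dim_col A) (dim_row A) (\<lambda>(i,j). cnj (A $$ (j,i)))"

definition csubspace :: "nat \<Rightarrow> complex vec set \<Rightarrow> bool" where
  "csubspace n V \<longleftrightarrow> V \<subseteq> carrier_vec n \<and> 0\<^sub>v n \<in> V \<and>
     (\<forall>u\<in>V. \<forall>v\<in>V. u + v \<in> V) \<and> (\<forall>c::complex. \<forall>v\<in>V. c \<cdot>\<^sub>v v \<in> V)"

definition mrange :: "nat \<Rightarrow> complex mat \<Rightarrow> complex vec set" where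
  "mrange n A = {A *\<^sub>v v | v. v \<in> carrier_vec n}"

definition ocompl_in :: "complex vec set \<Rightarrow> complex vec set \<Rightarrow> complex vec set" where
  "ocompl_in W V = {w \<in> W. \<forall>v\<in>V. cinner v w = 0}"

definition osum :: "complex vec set \<Rightarrow> complex vec set \<Rightarrow> complex vec set" where
  "osum A B = {a + b | a b. a \<in> A \<and> b \<in> B}"

definition is_oproj :: "nat \<Rightarrow> complex vec set \<Rightarrow> complex mat \<Rightarrow> bool" where
  "is_oproj n V P \<longleftrightarrow> P \<in> carrier_mat n n \<and> P * P = P \<and> adj P = P \<and> mrange n P = V"

definition proj :: "nat \<Rightarrow> complex vec set \<Rightarrow> complex mat" where
  "proj n V = (THE P. is_oproj n V P)"

definition is_kraus :: "nat \<Rightarrow> complex mat list \<Rightarrow> bool" where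
  "is_kraus n Ms \<longleftrightarrow> (\<forall>M\<in>set Ms. M \<in> carrier_mat n n) \<and>
     foldr (\<lambda>M acc. adj M * M + acc) Ms (0\<^sub>m n n) = 1\<^sub>m n"

definition kraus_map :: "nat \<Rightarrow> complex mat list \<Rightarrow> complex mat \<Rightarrow> complex mat" where
  "kraus_map n Ms \<rho> = foldr (\<lambda>M acc. M * \<rho> * adj M + acc) Ms (0\<^sub>m n n)"

definition mtrace :: "complex mat \<Rightarrow> complex" where
  "mtrace A = (\<Sum>i<dim_row A. A $$ (i,i))"

definition psd :: "nat \<Rightarrow> complex mat \<Rightarrow> bool" where
  "psd n A \<longleftrightarrow> A \<in> carrier_mat n n \<and> adj A = A \<and>
     (\<forall>v\<in>carrier_vec n. Im (cinner v (A *\<^sub>v v)) = 0 \<and> Re (cinner v (A *\<^sub>v v)) \<ge> 0)"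

definition density :: "nat \<Rightarrow> complex mat \<Rightarrow> bool" where
  "density n \<rho> \<longleftrightarrow> psd n \<rho> \<and> mtrace \<rho> = 1"

text \<open>Support of a positive operator = its range.\<close>
definition invariant_subspace :: "nat \<Rightarrow> complex mat list \<Rightarrow> complex vec set \<Rightarrow> bool" where
  "invariant_subspace n Ms S \<longleftrightarrow>
     (\<forall>\<rho>. psd n \<rho> \<and> mrange n \<rho> \<subseteq> S \<longrightarrow> mrange n (kraus_map n Ms \<rho>) \<subseteq> S)"

text \<open>DID construction.  did_SR k = (S_{k+1}, R_{k+1}).\<close>
primrec did_SR :: "nat \<Rightarrow> complex mat list \<Rightarrow> complex vec set \<Rightarrow> nat \<Rightarrow> complex vec set \<times> complex vec set" where
  "did_SR n Ms S 0 = (S, ocompl_in (carrier_vec n) S)"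
| "did_SR n Ms S (Suc k) =
     (let Si = fst (did_SR n Ms S k); Ri = snd (did_SR n Ms S k);
          Rn = {v \<in> Ri. \<forall>M\<in>set Ms. proj n Si *\<^sub>v (M *\<^sub>v v) = 0\<^sub>v n}
      in (osum Si (ocompl_in Ri Rn), Rn))"

definition did_R :: "nat \<Rightarrow> complex mat list \<Rightarrow> complex vec set \<Rightarrow> nat \<Rightarrow> complex vec set" where
  "did_R n Ms S i = snd (did_SR n Ms S (i - 1))"

text \<open>T_0 = S, and T_i = R_i \<ominus> R_{i+1} for i \<ge> 1 (for the last step, where
  R_{N+1} = {0}, this is R_N as in case (2)).\<close>
definition did_T :: "nat \<Rightarrow> complex mat list \<Rightarrow> complex vec set \<Rightarrow> nat \<Rightarrow> complex vec set" where
  "did_T n Ms S i = (if i = 0 then S else ocompl_in (did_R n Ms S i) (did_R n Ms S (Suc i)))"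

definition did_success :: "nat \<Rightarrow> complex mat list \<Rightarrow> complex vec set \<Rightarrow> nat \<Rightarrow> bool" where
  "did_success n Ms S N \<longleftrightarrow> 1 \<le> N \<and>
     (\<forall>i\<in>{1..N}. did_R n Ms S (Suc i) \<noteq> did_R n Ms S i) \<and>
     (\<forall>i\<in>{1..<N}. did_R n Ms S (Suc i) \<noteq> {0\<^sub>v n}) \<and>
     did_R n Ms S (Suc N) = {0\<^sub>v n}"

text \<open>G_i = sum_k M_{k,P_i}^\<dagger> M_{k,P_i}, represented as the compressed matrix
  Pi_{T_i} (sum_k M_k^\<dagger> Pi_{T_{i-1}} M_k) Pi_{T_i}, viewed as an operator on T_i.\<close>
definition did_G :: "nat \<Rightarrow> complex mat list \<Rightarrow> complex vec set \<Rightarrow> nat \<Rightarrow> complex mat" where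
  "did_G n Ms S i =
     foldr (\<lambda>M acc. adj (proj n (did_T n Ms S (i - 1)) * M * proj n (did_T n Ms S i))
                    * (proj n (did_T n Ms S (i - 1)) * M * proj n (did_T n Ms S i)) + acc)
           Ms (0\<^sub>m n n)"

definition pos_def_on :: "complex vec set \<Rightarrow> complex mat \<Rightarrow> bool" where
  "pos_def_on V G \<longleftrightarrow> (\<forall>v\<in>V. v \<noteq> 0\<^sub>v (dim_vec v) \<longrightarrow>
     Im (cinner v (G *\<^sub>v v)) = 0 \<and> Re (cinner v (G *\<^sub>v v)) > 0)"

text \<open>Eigenvalues of G as an operator on V (G is Hermitian, so they are real).\<close>
definition eigs_on :: "complex vec set \<Rightarrow> complex mat \<Rightarrow> real set" where
  "eigs_on V G = {l. \<exists>v\<in>V. v \<noteq> 0\<^sub>v (dim_vec v) \<and> G *\<^sub>v v = complex_of_real l \<cdot>\<^sub>v v}"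

end

theory Submission
  imports Defs "Jordan_Normal_Form.Spectral_Radius"
begin


lemma cinner_carrier: "u \<in> carrier_vec n \<Longrightarrow> cinner u v = (\<Sum>i<n. cnj (u $ i) * v $ i)"
  by (simp add: cinner_def)

lemma cinner_add_right: "u \<in> carrier_vec n \<Longrightarrow> v \<in> carrier_vec n \<Longrightarrow> w \<in> carrier_vec n \<Longrightarrow>
  cinner u (v + w) = cinner u v + cinner u w"
  by (simp add: cinner_carrier distrib_left sum.distrib)

lemma cinner_minus_right: "u \<in> carrier_vec n \<Longrightarrow> v \<in> carrier_vec n \<Longrightarrow> w \<in> carrier_vec n \<Longrightarrow>
  cinner u (v - w) = cinner u v - cinner u w"
  by (simp add: cinner_carrier right_diff_distrib sum_subtractf)

lemma cinner_smult_right: "u \<in> carrier_vec n \<Longrightarrow> v \<in> carrier_vec n \<Longrightarrow>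
  cinner u (c \<cdot>\<^sub>v v) = c * cinner u v"
  by (simp add: cinner_carrier sum_distrib_left algebra_simps)

lemma cinner_add_left: "u \<in> carrier_vec n \<Longrightarrow> v \<in> carrier_vec n \<Longrightarrow>
  cinner (u + v) w = cinner u w + cinner v w"
  by (simp add: cinner_def distrib_right sum.distrib)

lemma cinner_minus_left: "u \<in> carrier_vec n \<Longrightarrow> v \<in> carrier_vec n \<Longrightarrow>
  cinner (u - v) w = cinner u w - cinner v w"
  by (simp add: cinner_def left_diff_distrib sum_subtractf)

lemma cinner_smult_left: "u \<in> carrier_vec n \<Longrightarrow>
  cinner (c \<cdot>\<^sub>v u) w = cnj c * cinner u w"
  by (simp add: cinner_carrier sum_distrib_left algebra_simps)

lemma cinner_zero_right: "u \<in> carrier_vec n \<Longrightarrow> cinner u (0\<^sub>v n) = 0"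
  by (simp add: cinner_carrier)

lemma cinner_zero_left: "cinner (0\<^sub>v n) u = 0"
  by (simp add: cinner_def)

lemma cinner_cnj: "u \<in> carrier_vec n \<Longrightarrow> v \<in> carrier_vec n \<Longrightarrow> cinner v u = cnj (cinner u v)"
  by (simp add: cinner_carrier mult.commute)

lemma cinner_self_real0: "cinner v v = (\<Sum>i<dim_vec v. complex_of_real ((cmod (v $ i))^2))"
  unfolding cinner_def by (simp only: complex_norm_square mult.commute)

lemma cinner_self_real: "cinner v v = complex_of_real (\<Sum>i<dim_vec v. (cmod (v $ i))^2)"
  unfolding cinner_self_real0 of_real_sum ..

lemma cinner_self_Im: "Im (cinner v v) = 0"
  by (simp add: cinner_self_real)

lemma cinner_self_Re: "Re (cinner v v) \<ge> 0"
  by (simp add: cinner_self_real sum_nonneg)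

lemma cinner_self_zero: "v \<in> carrier_vec n \<Longrightarrow> cinner v v = 0 \<Longrightarrow> v = 0\<^sub>v n"
proof -
  assume v: "v \<in> carrier_vec n" and z: "cinner v v = 0"
  have "(\<Sum>i<dim_vec v. (cmod (v $ i))^2) = 0" using z unfolding cinner_self_real of_real_eq_0_iff .
  hence "\<forall>i\<in>{..<dim_vec v}. (cmod (v $ i))^2 = 0"
    by (subst sum_nonneg_eq_0_iff[symmetric]) auto
  thus ?thesis using v by (intro eq_vecI) auto
qed

lemma cinner_self_pos: "v \<in> carrier_vec n \<Longrightarrow> v \<noteq> 0\<^sub>v n \<Longrightarrow> Re (cinner v v) > 0"
  using cinner_self_Re[of v] cinner_self_zero[of v n] cinner_self_Im[of v]
  by (metis complex_eq_iff less_eq_real_def zero_complex.sel)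

lemma adj_carrier[simp]: "A \<in> carrier_mat n m \<Longrightarrow> adj A \<in> carrier_mat m n"
  by (simp add: adj_def)

lemma adj_dims[simp]: "dim_row (adj A) = dim_col A" "dim_col (adj A) = dim_row A"
  by (simp_all add: adj_def)

lemma adj_index[simp]: "i < dim_col A \<Longrightarrow> j < dim_row A \<Longrightarrow> adj A $$ (i,j) = cnj (A $$ (j,i))"
  by (simp add: adj_def)

lemma adj_adj[simp]: "adj (adj A) = A"
  by (intro eq_matI) auto

lemma adj_mult: "A \<in> carrier_mat n m \<Longrightarrow> B \<in> carrier_mat m k \<Longrightarrow> adj (A * B) = adj B * adj A"
  by (intro eq_matI) (auto simp: scalar_prod_def mult.commute)

lemma adj_add: "A \<in> carrier_mat n m \<Longrightarrow> B \<in> carrier_mat n m \<Longrightarrow> adj (A + B) = adj A + adj B"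
  by (intro eq_matI) auto

lemma adj_zero[simp]: "adj (0\<^sub>m n m) = 0\<^sub>m m n"
  by (intro eq_matI) auto

lemma adj_one[simp]: "adj (1\<^sub>m n) = 1\<^sub>m n"
  by (intro eq_matI) auto

lemma cinner_adj: assumes A: "A \<in> carrier_mat n n" and u: "u \<in> carrier_vec n" and v: "v \<in> carrier_vec n"
  shows "cinner u (A *\<^sub>v v) = cinner (adj A *\<^sub>v u) v"
proof -
  have "cinner u (A *\<^sub>v v) = (\<Sum>j<n. cnj (u $ j) * (\<Sum>i<n. A $$ (j,i) * v $ i))"
    using A u v by (simp add: cinner_carrier scalar_prod_def atLeast0LessThan)
  also have "\<dots> = (\<Sum>j<n. \<Sum>i<n. cnj (u $ j) * A $$ (j,i) * v $ i)"
    by (simp add: sum_distrib_left mult.assoc)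
  also have "\<dots> = (\<Sum>i<n. \<Sum>j<n. cnj (u $ j) * A $$ (j,i) * v $ i)"
    by (rule sum.swap)
  also have "\<dots> = (\<Sum>i<n. cnj (\<Sum>j<n. cnj (A $$ (j,i)) * u $ j) * v $ i)"
    by (simp add: sum_distrib_right sum_distrib_left mult_ac)
  also have "\<dots> = cinner (adj A *\<^sub>v u) v"
    using A u v by (simp add: cinner_def scalar_prod_def atLeast0LessThan)
  finally show ?thesis .
qed

lemma cinner_herm: "A \<in> carrier_mat n n \<Longrightarrow> adj A = A \<Longrightarrow> u \<in> carrier_vec n \<Longrightarrow> v \<in> carrier_vec n \<Longrightarrow>
  cinner u (A *\<^sub>v v) = cinner (A *\<^sub>v u) v"
  using cinner_adj by metis

lemma mat_eq_by_vec: fixes A B :: "complex mat" assumes A: "A \<in> carrier_mat n n" and B: "B \<in> carrier_mat n n"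
  and eq: "\<And>x. x \<in> carrier_vec n \<Longrightarrow> A *\<^sub>v x = B *\<^sub>v x"
  shows "A = B"
proof (rule eq_matI)
  fix i j assume i: "i < dim_row B" and j: "j < dim_col B"
  have "(A *\<^sub>v unit_vec n j) $ i = (B *\<^sub>v unit_vec n j) $ i" using eq[of "unit_vec n j"] by simp
  thus "A $$ (i,j) = B $$ (i,j)" using A B i j by simp
qed (use A B in auto)

lemma mtrace_comm: fixes A B :: "complex mat" assumes A: "A \<in> carrier_mat n m" and B: "B \<in> carrier_mat m n"
  shows "mtrace (A * B) = mtrace (B * A)"
proof -
  have "mtrace (A * B) = (\<Sum>i<n. \<Sum>k<m. A $$ (i,k) * B $$ (k,i))"
    using A B by (simp add: mtrace_def scalar_prod_def atLeast0LessThan)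
  also have "\<dots> = (\<Sum>k<m. \<Sum>i<n. B $$ (k,i) * A $$ (i,k))"
    by (subst sum.swap) (simp add: mult.commute)
  also have "\<dots> = mtrace (B * A)"
    using A B by (simp add: mtrace_def scalar_prod_def atLeast0LessThan)
  finally show ?thesis .
qed

lemma mtrace_add: "A \<in> carrier_mat n n \<Longrightarrow> B \<in> carrier_mat n n \<Longrightarrow> mtrace (A + B) = mtrace A + mtrace B"
  by (simp add: mtrace_def sum.distrib)

lemma mtrace_zero[simp]: "mtrace (0\<^sub>m n n) = 0"
  by (simp add: mtrace_def)



definition lc :: "nat \<Rightarrow> nat \<Rightarrow> (nat \<Rightarrow> complex) \<Rightarrow> (nat \<Rightarrow> complex vec) \<Rightarrow> complex vec" where
  "lc n m c u = vec n (\<lambda>a. \<Sum>j<m. c j * u j $ a)"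

definition orthonormal :: "nat \<Rightarrow> complex vec set \<Rightarrow> nat \<Rightarrow> (nat \<Rightarrow> complex vec) \<Rightarrow> bool" where
  "orthonormal n V m u \<longleftrightarrow> (\<forall>j<m. u j \<in> V \<and> u j \<in> carrier_vec n) \<and>
     (\<forall>j<m. \<forall>k<m. cinner (u j) (u k) = (if j = k then 1 else 0))"

definition ocomplete :: "nat \<Rightarrow> complex vec set \<Rightarrow> nat \<Rightarrow> (nat \<Rightarrow> complex vec) \<Rightarrow> bool" where
  "ocomplete n V m u \<longleftrightarrow> (\<forall>w\<in>V. w = lc n m (\<lambda>j. cinner (u j) w) u)"

lemma lc_carrier[simp]: "lc n m c u \<in> carrier_vec n"
  by (simp add: lc_def)

lemma lc_dim[simp]: "dim_vec (lc n m c u) = n"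
  by (simp add: lc_def)

lemma lc_0[simp]: "lc n 0 c u = 0\<^sub>v n"
  by (intro eq_vecI) (simp_all add: lc_def)

lemma lc_Suc: "u m \<in> carrier_vec n \<Longrightarrow> lc n (Suc m) c u = lc n m c u + c m \<cdot>\<^sub>v u m"
  by (intro eq_vecI) (auto simp: lc_def)

lemma lc_cong: "(\<And>j. j < m \<Longrightarrow> c j = d j) \<Longrightarrow> (\<And>j. j < m \<Longrightarrow> u j = v j) \<Longrightarrow> lc n m c u = lc n m d v"
  by (simp add: lc_def)

lemma lc_zero: "(\<And>j. j < m \<Longrightarrow> c j = 0) \<Longrightarrow> lc n m c u = 0\<^sub>v n"
  by (intro eq_vecI) (auto simp: lc_def)

lemma csubspace_carrier: "csubspace n V \<Longrightarrow> v \<in> V \<Longrightarrow> v \<in> carrier_vec n"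
  by (auto simp: csubspace_def)

lemma csubspace_zero: "csubspace n V \<Longrightarrow> 0\<^sub>v n \<in> V"
  by (auto simp: csubspace_def)

lemma csubspace_add: "csubspace n V \<Longrightarrow> u \<in> V \<Longrightarrow> v \<in> V \<Longrightarrow> u + v \<in> V"
  by (auto simp: csubspace_def)

lemma csubspace_smult: "csubspace n V \<Longrightarrow> v \<in> V \<Longrightarrow> c \<cdot>\<^sub>v v \<in> V"
  by (auto simp: csubspace_def)

lemma csubspace_minus: assumes V: "csubspace n V" and u: "u \<in> V" and v: "v \<in> V" shows "u - v \<in> V"
proof -
  have uc: "u \<in> carrier_vec n" and vc: "v \<in> carrier_vec n" using V u v by (auto simp: csubspace_def)
  have "u - v = u + (-1) \<cdot>\<^sub>v v" using uc vc by (intro eq_vecI) auto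
  thus ?thesis using csubspace_add[OF V u csubspace_smult[OF V v]] by simp
qed

lemma lc_in: assumes V: "csubspace n V" and u: "\<And>j. j < m \<Longrightarrow> u j \<in> V"
  shows "lc n m c u \<in> V"
  using u
proof (induction m)
  case 0 thus ?case using csubspace_zero[OF V] by simp
next
  case (Suc m)
  have um: "u m \<in> V" using Suc.prems by simp
  hence "u m \<in> carrier_vec n" using V csubspace_carrier by blast
  thus ?case using Suc csubspace_add[OF V _ csubspace_smult[OF V um]] by (simp add: lc_Suc)
qed

lemma cinner_lc_right: assumes w: "w \<in> carrier_vec n" and u: "\<And>j. j < m \<Longrightarrow> u j \<in> carrier_vec n"
  shows "cinner w (lc n m c u) = (\<Sum>j<m. c j * cinner w (u j))"
proof -
  have "cinner w (lc n m c u) = (\<Sum>a<n. \<Sum>j<m. cnj (w $ a) * (c j * u j $ a))"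
    using w by (simp add: cinner_carrier lc_def sum_distrib_left)
  also have "\<dots> = (\<Sum>j<m. \<Sum>a<n. cnj (w $ a) * (c j * u j $ a))" by (rule sum.swap)
  also have "\<dots> = (\<Sum>j<m. c j * cinner w (u j))"
    using w by (simp add: cinner_carrier sum_distrib_left mult_ac)
  finally show ?thesis .
qed

lemma cinner_lc_left: assumes w: "w \<in> carrier_vec n" and u: "\<And>j. j < m \<Longrightarrow> u j \<in> carrier_vec n"
  shows "cinner (lc n m c u) w = (\<Sum>j<m. cnj (c j) * cinner (u j) w)"
proof -
  have "cinner (lc n m c u) w = cnj (cinner w (lc n m c u))"
    using w by (simp add: cinner_cnj[of w n "lc n m c u"])
  also have "\<dots> = (\<Sum>j<m. cnj (c j) * cinner (u j) w)"
    using w u by (simp add: cinner_lc_right cinner_cnj[of w n])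
  finally show ?thesis .
qed

lemma ortho_carrier: "orthonormal n V m u \<Longrightarrow> j < m \<Longrightarrow> u j \<in> carrier_vec n"
  by (simp add: orthonormal_def)

lemma ortho_in: "orthonormal n V m u \<Longrightarrow> j < m \<Longrightarrow> u j \<in> V"
  by (simp add: orthonormal_def)

lemma ortho_dim: "orthonormal n V m u \<Longrightarrow> j < m \<Longrightarrow> dim_vec (u j) = n"
  by (simp add: orthonormal_def)

lemma ortho_inner: "orthonormal n V m u \<Longrightarrow> j < m \<Longrightarrow> k < m \<Longrightarrow> cinner (u j) (u k) = (if j = k then 1 else 0)"
  by (simp add: orthonormal_def)

lemma cinner_lc_ortho: assumes o: "orthonormal n V m u" and k: "k < m"
  shows "cinner (u k) (lc n m c u) = c k"
proof -
  have "cinner (u k) (lc n m c u) = (\<Sum>j<m. c j * (if k = j then 1 else 0))"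
    using o k by (simp add: cinner_lc_right ortho_carrier ortho_inner)
  also have "\<dots> = c k" using k by (simp add: if_distrib cong: if_cong)
  finally show ?thesis .
qed

lemma lc_mult: assumes A: "A \<in> carrier_mat n n" and u: "\<And>j. j < m \<Longrightarrow> u j \<in> carrier_vec n"
  shows "A *\<^sub>v lc n m c u = lc n m c (\<lambda>j. A *\<^sub>v u j)"
proof (rule eq_vecI)
  fix a assume "a < dim_vec (lc n m c (\<lambda>j. A *\<^sub>v u j))"
  hence a: "a < n" by simp
  have ud: "\<And>j. j < m \<Longrightarrow> dim_vec (u j) = n" using u by auto
  have "(A *\<^sub>v lc n m c u) $ a = (\<Sum>b<n. A $$ (a,b) * (\<Sum>j<m. c j * u j $ b))"
    using A a by (simp add: scalar_prod_def lc_def atLeast0LessThan)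
  also have "\<dots> = (\<Sum>j<m. \<Sum>b<n. A $$ (a,b) * (c j * u j $ b))"
    by (simp add: sum_distrib_left) (rule sum.swap)
  also have "\<dots> = lc n m c (\<lambda>j. A *\<^sub>v u j) $ a"
    using A a ud by (auto simp: lc_def scalar_prod_def atLeast0LessThan sum_distrib_left mult_ac carrier_vecD intro!: sum.cong)
  finally show "(A *\<^sub>v lc n m c u) $ a = lc n m c (\<lambda>j. A *\<^sub>v u j) $ a" .
qed (use A in simp)

lemma lc_in_carrier_coeff: assumes o: "orthonormal n V m u"
  shows "cinner (lc n m c u) (lc n m c u) = (\<Sum>j<m. complex_of_real ((cmod (c j))^2))"
proof -
  have "cinner (lc n m c u) (lc n m c u) = (\<Sum>j<m. cnj (c j) * cinner (u j) (lc n m c u))"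
    using o by (simp add: cinner_lc_left ortho_carrier)
  also have "\<dots> = (\<Sum>j<m. cnj (c j) * c j)"
    using o by (simp add: cinner_lc_ortho)
  also have "\<dots> = (\<Sum>j<m. complex_of_real ((cmod (c j))^2))"
    by (intro sum.cong refl) (simp only: complex_norm_square mult.commute)
  finally show ?thesis .
qed

lemma bessel: assumes o: "orthonormal n V m u" and x: "x \<in> carrier_vec n"
  shows "(\<Sum>j<m. (cmod (cinner (u j) x))^2) \<le> Re (cinner x x)"
proof -
  define c where "c = (\<lambda>j. cinner (u j) x)"
  define y where "y = lc n m c u"
  define z where "z = x - y"
  have yc: "y \<in> carrier_vec n" and zc: "z \<in> carrier_vec n" using x by (auto simp: y_def z_def)
  have xyz: "x = y + z" using x yc by (auto simp: z_def)
  have uz: "cinner (u k) z = 0" if k: "k < m" for k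
    using o k x yc by (simp add: z_def cinner_minus_right[of _ n] ortho_carrier y_def cinner_lc_ortho c_def)
  have yz: "cinner y z = 0" using zc o uz by (simp add: y_def cinner_lc_left ortho_carrier)
  have zy: "cinner z y = 0" using yz cinner_cnj[OF yc zc] by simp
  have "cinner x x = cinner y y + cinner z z"
    unfolding xyz using yc zc yz zy by (simp add: cinner_add_left[of _ n] cinner_add_right[of _ n])
  hence "Re (cinner x x) = Re (cinner y y) + Re (cinner z z)" by simp
  moreover have "Re (cinner y y) = (\<Sum>j<m. (cmod (c j))^2)"
    unfolding y_def lc_in_carrier_coeff[OF o] by simp
  ultimately show ?thesis using cinner_self_Re[of z] by (simp add: c_def)
qed

lemma cinner_unit_vec: "u \<in> carrier_vec n \<Longrightarrow> a < n \<Longrightarrow> cinner u (unit_vec n a) = cnj (u $ a)"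
  by (simp add: cinner_carrier unit_vec_def if_distrib cong: if_cong)

lemma ortho_le: assumes o: "orthonormal n V m u" shows "m \<le> n"
proof -
  have "real m = (\<Sum>j<m. Re (cinner (u j) (u j)))"
    using o by (simp add: ortho_inner)
  also have "\<dots> = (\<Sum>j<m. \<Sum>a<n. (cmod (u j $ a))^2)"
    using o by (intro sum.cong refl) (simp add: cinner_self_real ortho_dim[OF o])
  also have "\<dots> = (\<Sum>a<n. \<Sum>j<m. (cmod (cinner (u j) (unit_vec n a)))^2)"
    by (subst sum.swap) (intro sum.cong refl, simp add: cinner_unit_vec ortho_carrier[OF o])
  also have "\<dots> \<le> (\<Sum>a<n. Re (cinner (unit_vec n a) (unit_vec n a)))"
    by (intro sum_mono bessel[OF o]) simp
  also have "\<dots> = real n"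
    by (simp add: cinner_unit_vec)
  finally show ?thesis by simp
qed

lemma ortho_extend: assumes o: "orthonormal n V m u" and z: "z \<in> V" "z \<in> carrier_vec n"
  and zz: "cinner z z = 1" and uz: "\<And>k. k < m \<Longrightarrow> cinner (u k) z = 0"
  shows "orthonormal n V (Suc m) (u(m := z))"
proof -
  have zu: "cinner z (u k) = 0" if "k < m" for k
    using uz[OF that] cinner_cnj[OF ortho_carrier[OF o that] z(2)] by simp
  show ?thesis unfolding orthonormal_def
    using o z zz uz zu by (auto simp: less_Suc_eq orthonormal_def)
qed

lemma normalize_vec: assumes z: "z \<in> carrier_vec n" "z \<noteq> 0\<^sub>v n"
  shows "\<exists>c. c \<noteq> 0 \<and> cinner (c \<cdot>\<^sub>v z) (c \<cdot>\<^sub>v z) = 1"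
proof -
  define r where "r = Re (cinner z z)"
  have r: "r > 0" using cinner_self_pos[OF z] by (simp add: r_def)
  have zz: "cinner z z = complex_of_real r" using cinner_self_Im[of z] by (simp add: r_def complex_eq_iff)
  define c where "c = complex_of_real (1 / sqrt r)"
  have "cinner (c \<cdot>\<^sub>v z) (c \<cdot>\<^sub>v z) = cnj c * (c * cinner z z)"
    using z by (simp add: cinner_smult_left[of _ n] cinner_smult_right[of _ n])
  also have "\<dots> = complex_of_real (1 / sqrt r * (1 / sqrt r) * r)"
    by (simp only: c_def zz complex_cnj_complex_of_real of_real_mult mult.assoc)
  also have "\<dots> = 1"
  proof -
    have "sqrt r * sqrt r = r" using r by simp
    hence "1 / sqrt r * (1 / sqrt r) * r = 1" using r by (simp add: field_simps)
    thus ?thesis by simp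
  qed
  finally show ?thesis using r by (intro exI[of _ c]) (simp add: c_def)
qed

lemma ext_family: assumes le: "\<And>m u. orthonormal n V m u \<Longrightarrow> m \<le> n"
  and ext: "\<And>m u. orthonormal n V m u \<Longrightarrow> good m u \<Longrightarrow> \<not> ocomplete n V m u \<Longrightarrow>
      \<exists>u'. orthonormal n V (Suc m) u' \<and> good (Suc m) u'"
  and g0: "good 0 uu"
  shows "\<exists>m u. orthonormal n V m u \<and> good m u \<and> ocomplete n V m u"
proof -
  have "\<exists>m u. orthonormal n V m u \<and> good m u \<and> (ocomplete n V m u \<or> k \<le> m)" for k
  proof (induction k)
    case 0 thus ?case using g0 by (intro exI[of _ 0] exI[of _ uu]) (simp add: orthonormal_def)
  next
    case (Suc k)
    then obtain m u where mu: "orthonormal n V m u" "good m u" "ocomplete n V m u \<or> k \<le> m" by blast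
    show ?case
    proof (cases "ocomplete n V m u")
      case True thus ?thesis using mu by blast
    next
      case False
      then obtain u' where "orthonormal n V (Suc m) u'" "good (Suc m) u'" using ext mu by blast
      thus ?thesis using mu False by (intro exI[of _ "Suc m"] exI[of _ u']) auto
    qed
  qed
  from this[of "Suc n"] obtain m u where "orthonormal n V m u" "good m u" "ocomplete n V m u \<or> Suc n \<le> m"
    by blast
  thus ?thesis using le by fastforce
qed

lemma inocomplete_vec: assumes V: "csubspace n V" and o: "orthonormal n V m u" and nc: "\<not> ocomplete n V m u"
  shows "\<exists>z. z \<in> V \<and> z \<in> carrier_vec n \<and> cinner z z = 1 \<and> (\<forall>k<m. cinner (u k) z = 0)"
proof -
  obtain w where w: "w \<in> V" and ne: "w \<noteq> lc n m (\<lambda>j. cinner (u j) w) u"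
    using nc unfolding ocomplete_def by blast
  define y where "y = lc n m (\<lambda>j. cinner (u j) w) u"
  define z where "z = w - y"
  have wc: "w \<in> carrier_vec n" using V w csubspace_carrier by blast
  have yV: "y \<in> V" unfolding y_def by (rule lc_in[OF V ortho_in[OF o]])
  have zV: "z \<in> V" unfolding z_def by (rule csubspace_minus[OF V w yV])
  have zc: "z \<in> carrier_vec n" using wc by (simp add: z_def y_def)
  have z0: "z \<noteq> 0\<^sub>v n"
  proof
    assume h: "z = 0\<^sub>v n"
    have "w = y"
    proof (rule eq_vecI)
      fix i assume i: "i < dim_vec y"
      hence "z $ i = 0" using h by (simp add: y_def)
      thus "w $ i = y $ i" using wc i by (simp add: z_def y_def)
    qed (use wc in \<open>simp add: y_def\<close>)
    thus False using ne by (simp add: y_def)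
  qed
  have uz: "cinner (u k) z = 0" if "k < m" for k
    using that wc o by (simp add: z_def y_def cinner_minus_right[of _ n] ortho_carrier cinner_lc_ortho)
  obtain c where c: "c \<noteq> 0" "cinner (c \<cdot>\<^sub>v z) (c \<cdot>\<^sub>v z) = 1" using normalize_vec[OF zc z0] by blast
  show ?thesis
    using c zc uz o csubspace_smult[OF V zV]
    by (intro exI[of _ "c \<cdot>\<^sub>v z"]) (auto simp: cinner_smult_right[of _ n] ortho_carrier)
qed

lemma onb_exists: assumes V: "csubspace n V"
  shows "\<exists>m u. orthonormal n V m u \<and> ocomplete n V m u"
proof -
  have "\<exists>m u. orthonormal n V m u \<and> (\<lambda>_ _. True) m u \<and> ocomplete n V m u"
  proof (rule ext_family[where uu = undefined])
    fix m u assume o: "orthonormal n V m u" and nc: "\<not> ocomplete n V m u"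
    then obtain z where z: "z \<in> V" "z \<in> carrier_vec n" "cinner z z = 1" "\<forall>k<m. cinner (u k) z = 0"
      using inocomplete_vec[OF V] by blast
    show "\<exists>u'. orthonormal n V (Suc m) u' \<and> True"
      using ortho_extend[OF o z(1,2,3)] z(4) by blast
  qed (auto intro: ortho_le)
  thus ?thesis by blast
qed



lemma vL_a: "(x::complex vec) \<in> carrier_vec n \<Longrightarrow> y \<in> carrier_vec n \<Longrightarrow> p \<in> carrier_vec n \<Longrightarrow> y - p = (x - p) - (x - y)"
  by (intro eq_vecI) auto
lemma vL_b: "(x::complex vec) \<in> carrier_vec n \<Longrightarrow> p \<in> carrier_vec n \<Longrightarrow> x = p + (x - p)"
  by (intro eq_vecI) auto
lemma vL_c: "(x::complex vec) \<in> carrier_vec n \<Longrightarrow> a \<in> carrier_vec n \<Longrightarrow> b \<in> carrier_vec n \<Longrightarrow> x - (a + b) = (x - a) - b"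
  by (intro eq_vecI) auto
lemma vL_d: "(x::complex vec) \<in> carrier_vec n \<Longrightarrow> a \<in> carrier_vec n \<Longrightarrow> b \<in> carrier_vec n \<Longrightarrow> x - (a + b) = (x - b) - a"
  by (intro eq_vecI) auto
lemma vL_e: "(y::complex vec) \<in> carrier_vec n \<Longrightarrow> p \<in> carrier_vec n \<Longrightarrow> y - p = 0\<^sub>v n \<Longrightarrow> p = y"
proof (rule eq_vecI)
  fix i assume y: "y \<in> carrier_vec n" and p: "p \<in> carrier_vec n" and h: "y - p = 0\<^sub>v n" and i: "i < dim_vec y"
  have "(y - p) $ i = 0" using h i y by simp
  thus "p $ i = y $ i" using y p i by simp
qed simp

definition pmat :: "nat \<Rightarrow> nat \<Rightarrow> (nat \<Rightarrow> complex vec) \<Rightarrow> complex mat" where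
  "pmat n m u = mat n n (\<lambda>(a,b). \<Sum>j<m. u j $ a * cnj (u j $ b))"

lemma pmat_carrier[simp]: "pmat n m u \<in> carrier_mat n n"
  by (simp add: pmat_def)

lemma pmat_mult_vec: assumes x: "x \<in> carrier_vec n" and u: "\<And>j. j < m \<Longrightarrow> u j \<in> carrier_vec n"
  shows "pmat n m u *\<^sub>v x = lc n m (\<lambda>j. cinner (u j) x) u"
proof (rule eq_vecI)
  fix a assume "a < dim_vec (lc n m (\<lambda>j. cinner (u j) x) u)"
  hence a: "a < n" by simp
  have ud: "\<And>j. j < m \<Longrightarrow> dim_vec (u j) = n" using u by auto
  have "(pmat n m u *\<^sub>v x) $ a = (\<Sum>b<n. (\<Sum>j<m. u j $ a * cnj (u j $ b)) * x $ b)"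
    using a x by (simp add: pmat_def scalar_prod_def atLeast0LessThan)
  also have "\<dots> = (\<Sum>j<m. \<Sum>b<n. u j $ a * cnj (u j $ b) * x $ b)"
    by (simp add: sum_distrib_right) (rule sum.swap)
  also have "\<dots> = lc n m (\<lambda>j. cinner (u j) x) u $ a"
    using a ud by (auto simp: lc_def cinner_def sum_distrib_left sum_distrib_right mult_ac intro!: sum.cong)
  finally show "(pmat n m u *\<^sub>v x) $ a = lc n m (\<lambda>j. cinner (u j) x) u $ a" .
qed (simp add: pmat_def)

lemma onb_oproj: assumes V: "csubspace n V" and o: "orthonormal n V m u" and c: "ocomplete n V m u"
  shows "is_oproj n V (pmat n m u)"
proof -
  let ?P = "pmat n m u"
  have uc: "\<And>j. j < m \<Longrightarrow> u j \<in> carrier_vec n" using ortho_carrier[OF o] .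
  have Pv: "?P *\<^sub>v x = lc n m (\<lambda>j. cinner (u j) x) u" if "x \<in> carrier_vec n" for x
    using pmat_mult_vec[OF that uc] .
  have PP: "?P * ?P = ?P"
  proof (rule mat_eq_by_vec[of _ n])
    fix x :: "complex vec" assume x: "x \<in> carrier_vec n"
    have "(?P * ?P) *\<^sub>v x = ?P *\<^sub>v (?P *\<^sub>v x)" by (rule assoc_mult_mat_vec[OF pmat_carrier pmat_carrier x])
    also have "\<dots> = lc n m (\<lambda>j. cinner (u j) (lc n m (\<lambda>j. cinner (u j) x) u)) u"
      using x by (simp add: Pv)
    also have "\<dots> = lc n m (\<lambda>j. cinner (u j) x) u"
      by (rule lc_cong) (simp_all add: cinner_lc_ortho[OF o])
    finally show "(?P * ?P) *\<^sub>v x = ?P *\<^sub>v x" using x by (simp add: Pv)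
  qed (metis mult_carrier_mat pmat_carrier, simp)
  have adjP: "adj ?P = ?P"
    by (intro eq_matI) (simp_all add: pmat_def mult.commute)
  have rng: "mrange n ?P = V"
  proof
    show "mrange n ?P \<subseteq> V" unfolding mrange_def using lc_in[OF V ortho_in[OF o]] Pv by auto
    show "V \<subseteq> mrange n ?P"
    proof
      fix w assume w: "w \<in> V"
      hence wc: "w \<in> carrier_vec n" using csubspace_carrier[OF V] by blast
      have "w = ?P *\<^sub>v w" using c w Pv[OF wc] unfolding ocomplete_def by simp
      thus "w \<in> mrange n ?P" unfolding mrange_def using wc by blast
    qed
  qed
  show ?thesis unfolding is_oproj_def using PP adjP rng by simp
qed

lemma oproj_in: "is_oproj n V P \<Longrightarrow> x \<in> carrier_vec n \<Longrightarrow> P *\<^sub>v x \<in> V"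
  by (auto simp: is_oproj_def mrange_def)

lemma oproj_subset: "is_oproj n V P \<Longrightarrow> V \<subseteq> carrier_vec n"
  by (auto simp: is_oproj_def mrange_def)

lemma oproj_orth: assumes P: "is_oproj n V P" and x: "x \<in> carrier_vec n" and v: "v \<in> V"
  shows "cinner v (x - P *\<^sub>v x) = 0"
proof -
  have Pc: "P \<in> carrier_mat n n" and PP: "P * P = P" and aP: "adj P = P"
    using P by (auto simp: is_oproj_def)
  obtain w where w: "w \<in> carrier_vec n" and vw: "v = P *\<^sub>v w"
    using P v by (auto simp: is_oproj_def mrange_def)
  have "cinner v (x - P *\<^sub>v x) = cinner (P *\<^sub>v w) x - cinner (P *\<^sub>v w) (P *\<^sub>v x)"
    using Pc w x by (simp add: vw cinner_minus_right[of _ n])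
  also have "\<dots> = cinner w (P *\<^sub>v x) - cinner w (P *\<^sub>v (P *\<^sub>v x))"
    using Pc w x aP by (simp add: cinner_herm[of P n])
  also have "P *\<^sub>v (P *\<^sub>v x) = P *\<^sub>v x"
    using Pc x PP by (metis assoc_mult_mat_vec)
  finally show ?thesis by simp
qed

lemma oproj_unique_vec: assumes P: "is_oproj n V P" and x: "x \<in> carrier_vec n" and y: "y \<in> V"
  and orth: "\<And>v. v \<in> V \<Longrightarrow> cinner v (x - y) = 0"
  shows "P *\<^sub>v x = y"
proof -
  have Vc: "V \<subseteq> carrier_vec n" using oproj_subset[OF P] .
  have Pc: "P \<in> carrier_mat n n" using P by (simp add: is_oproj_def)
  let ?p = "P *\<^sub>v x"
  have pV: "?p \<in> V" using oproj_in[OF P x] .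
  have V: "csubspace n V"
  proof -
    have "V = mrange n P" using P by (simp add: is_oproj_def)
    show ?thesis unfolding csubspace_def
    proof (intro conjI ballI allI)
      show "V \<subseteq> carrier_vec n" by fact
      have "P *\<^sub>v 0\<^sub>v n = 0\<^sub>v n" using Pc by auto
      thus "0\<^sub>v n \<in> V" using oproj_in[OF P, of "0\<^sub>v n"] by simp
    next
      fix a b assume "a \<in> V" "b \<in> V"
      then obtain a' b' where "a' \<in> carrier_vec n" "b' \<in> carrier_vec n" "a = P *\<^sub>v a'" "b = P *\<^sub>v b'"
        using P by (auto simp: is_oproj_def mrange_def)
      thus "a + b \<in> V" using oproj_in[OF P, of "a' + b'"] Pc by (simp add: mult_add_distrib_mat_vec)
    next
      fix c :: complex and a assume "a \<in> V"
      then obtain a' where "a' \<in> carrier_vec n" "a = P *\<^sub>v a'"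
        using P by (auto simp: is_oproj_def mrange_def)
      thus "c \<cdot>\<^sub>v a \<in> V" using oproj_in[OF P, of "c \<cdot>\<^sub>v a'"] Pc by (simp add: mult_mat_vec)
    qed
  qed
  define d where "d = y - ?p"
  have dV: "d \<in> V" unfolding d_def by (rule csubspace_minus[OF V y pV])
  have dc: "d \<in> carrier_vec n" using dV Vc by auto
  have yc: "y \<in> carrier_vec n" using y Vc by auto
  have pc: "?p \<in> carrier_vec n" using Pc x by simp
  have "d = (x - ?p) - (x - y)" using x yc pc unfolding d_def by (rule vL_a)
  hence "cinner d d = cinner d (x - ?p) - cinner d (x - y)"
    using x yc pc dc by (simp add: cinner_minus_right[of _ n])
  also have "\<dots> = 0" using oproj_orth[OF P x dV] orth[OF dV] by simp
  finally have "d = 0\<^sub>v n" using cinner_self_zero[OF dc] by simp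
  thus ?thesis using yc pc unfolding d_def by (rule vL_e[rotated 2])
qed

lemma oproj_unique: assumes P: "is_oproj n V P" and Q: "is_oproj n V Q" shows "P = Q"
proof (rule mat_eq_by_vec[of _ n])
  fix x :: "complex vec" assume x: "x \<in> carrier_vec n"
  show "P *\<^sub>v x = Q *\<^sub>v x"
    by (rule oproj_unique_vec[OF P x oproj_in[OF Q x] oproj_orth[OF Q x]])
qed (use P Q in \<open>auto simp: is_oproj_def\<close>)

lemma proj_oproj: assumes V: "csubspace n V" shows "is_oproj n V (proj n V)"
proof -
  obtain m u where "orthonormal n V m u" "ocomplete n V m u" using onb_exists[OF V] by blast
  hence P: "is_oproj n V (pmat n m u)" using onb_oproj[OF V] by blast
  show ?thesis unfolding proj_def by (rule theI[of _ "pmat n m u"]) (use P oproj_unique in auto)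
qed

lemma proj_eq: "csubspace n V \<Longrightarrow> is_oproj n V P \<Longrightarrow> proj n V = P"
  using proj_oproj oproj_unique by blast

lemma proj_carrier[simp]: "csubspace n V \<Longrightarrow> proj n V \<in> carrier_mat n n"
  using proj_oproj by (auto simp: is_oproj_def)

lemma proj_mult_carrier[simp]: "csubspace n V \<Longrightarrow> x \<in> carrier_vec n \<Longrightarrow> proj n V *\<^sub>v x \<in> carrier_vec n"
  using proj_carrier[of n V] by (metis mult_mat_vec_carrier)

lemma proj_herm: "csubspace n V \<Longrightarrow> adj (proj n V) = proj n V"
  using proj_oproj by (auto simp: is_oproj_def)

lemma proj_idem: "csubspace n V \<Longrightarrow> proj n V * proj n V = proj n V"
  using proj_oproj by (auto simp: is_oproj_def)

lemma proj_in: "csubspace n V \<Longrightarrow> x \<in> carrier_vec n \<Longrightarrow> proj n V *\<^sub>v x \<in> V"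
  using proj_oproj oproj_in by blast

lemma proj_fix: assumes V: "csubspace n V" and v: "v \<in> V" shows "proj n V *\<^sub>v v = v"
proof -
  have vc: "v \<in> carrier_vec n" using V v csubspace_carrier by blast
  show ?thesis
  proof (rule oproj_unique_vec[OF proj_oproj[OF V] vc v])
    fix w assume "w \<in> V"
    hence "w \<in> carrier_vec n" using V csubspace_carrier by blast
    moreover have "v - v = 0\<^sub>v n" using vc by auto
    ultimately show "cinner w (v - v) = 0" by (simp add: cinner_zero_right)
  qed
qed

lemma proj_perp: assumes V: "csubspace n V" and y: "y \<in> carrier_vec n"
  and perp: "\<And>v. v \<in> V \<Longrightarrow> cinner v y = 0"
  shows "proj n V *\<^sub>v y = 0\<^sub>v n"
proof (rule oproj_unique_vec[OF proj_oproj[OF V] y csubspace_zero[OF V]])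
  fix v assume "v \<in> V"
  moreover have "y - 0\<^sub>v n = y" using y by auto
  ultimately show "cinner v (y - 0\<^sub>v n) = 0" using perp by simp
qed

lemma proj_orth: "csubspace n V \<Longrightarrow> x \<in> carrier_vec n \<Longrightarrow> v \<in> V \<Longrightarrow> cinner v (x - proj n V *\<^sub>v x) = 0"
  using proj_oproj oproj_orth by blast

lemma proj_norm_le: assumes V: "csubspace n V" and x: "x \<in> carrier_vec n"
  shows "Re (cinner (proj n V *\<^sub>v x) (proj n V *\<^sub>v x)) \<le> Re (cinner x x)"
proof -
  let ?p = "proj n V *\<^sub>v x"
  have pc: "?p \<in> carrier_vec n" using V x by simp
  have pV: "?p \<in> V" using proj_in[OF V x] .
  let ?z = "x - ?p"
  have zc: "?z \<in> carrier_vec n" using x pc by simp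
  have pz: "cinner ?p ?z = 0" using proj_orth[OF V x pV] .
  have zp: "cinner ?z ?p = 0" using pz cinner_cnj[OF pc zc] by simp
  have xe: "x = ?p + ?z" using x pc by (rule vL_b)
  have "cinner x x = cinner ?p ?p + cinner ?z ?z"
    apply (subst (1 2) xe)
    using pc zc pz zp by (simp add: cinner_add_left[of _ n] cinner_add_right[of _ n])
  thus ?thesis using cinner_self_Re[of ?z] by simp
qed

lemma csubspace_osum: assumes A: "csubspace n A" and B: "csubspace n B"
  shows "csubspace n (osum A B)"
  unfolding csubspace_def
proof (intro conjI ballI allI)
  show "osum A B \<subseteq> carrier_vec n"
    using csubspace_carrier[OF A] csubspace_carrier[OF B] by (auto simp: osum_def)
  show "0\<^sub>v n \<in> osum A B" unfolding osum_def using csubspace_zero[OF A] csubspace_zero[OF B]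
    by (intro CollectI exI[of _ "0\<^sub>v n"]) auto
next
  fix u v assume "u \<in> osum A B" "v \<in> osum A B"
  then obtain a b a' b' where ab: "a \<in> A" "b \<in> B" "a' \<in> A" "b' \<in> B" "u = a + b" "v = a' + b'"
    unfolding osum_def by blast
  have c: "a \<in> carrier_vec n" "b \<in> carrier_vec n" "a' \<in> carrier_vec n" "b' \<in> carrier_vec n"
    using ab A B csubspace_carrier by blast+
  have "u + v = (a + a') + (b + b')" using ab c by (intro eq_vecI) auto
  thus "u + v \<in> osum A B" unfolding osum_def using csubspace_add[OF A ab(1,3)] csubspace_add[OF B ab(2,4)]
    by blast
next
  fix c :: complex and v assume "v \<in> osum A B"
  then obtain a b where ab: "a \<in> A" "b \<in> B" "v = a + b" unfolding osum_def by blast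
  have cc: "a \<in> carrier_vec n" "b \<in> carrier_vec n" using ab A B csubspace_carrier by blast+
  have "c \<cdot>\<^sub>v v = c \<cdot>\<^sub>v a + c \<cdot>\<^sub>v b" using ab cc by (intro eq_vecI) (auto simp: distrib_left)
  thus "c \<cdot>\<^sub>v v \<in> osum A B" unfolding osum_def using csubspace_smult[OF A ab(1)] csubspace_smult[OF B ab(2)]
    by blast
qed

lemma csubspace_ocompl: assumes W: "csubspace n W" and V: "V \<subseteq> carrier_vec n"
  shows "csubspace n (ocompl_in W V)"
  unfolding csubspace_def ocompl_in_def
proof (intro conjI ballI allI)
  show "{w \<in> W. \<forall>v\<in>V. cinner v w = 0} \<subseteq> carrier_vec n" using W csubspace_carrier by blast
  show "0\<^sub>v n \<in> {w \<in> W. \<forall>v\<in>V. cinner v w = 0}" using csubspace_zero[OF W] V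
    by (auto simp: cinner_zero_right)
next
  fix u w assume u: "u \<in> {w \<in> W. \<forall>v\<in>V. cinner v w = 0}" and w: "w \<in> {w \<in> W. \<forall>v\<in>V. cinner v w = 0}"
  have "u \<in> carrier_vec n" "w \<in> carrier_vec n" using u w W csubspace_carrier by blast+
  thus "u + w \<in> {w \<in> W. \<forall>v\<in>V. cinner v w = 0}" using u w V csubspace_add[OF W]
    by (auto simp: cinner_add_right[of _ n])
next
  fix c :: complex and w assume w: "w \<in> {w \<in> W. \<forall>v\<in>V. cinner v w = 0}"
  have "w \<in> carrier_vec n" using w W csubspace_carrier by blast
  thus "c \<cdot>\<^sub>v w \<in> {w \<in> W. \<forall>v\<in>V. cinner v w = 0}" using w V csubspace_smult[OF W]
    by (auto simp: cinner_smult_right[of _ n])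
qed

lemma proj_osum: assumes A: "csubspace n A" and B: "csubspace n B"
  and AB: "\<And>a b. a \<in> A \<Longrightarrow> b \<in> B \<Longrightarrow> cinner a b = 0" and x: "x \<in> carrier_vec n"
  shows "proj n (osum A B) *\<^sub>v x = proj n A *\<^sub>v x + proj n B *\<^sub>v x"
proof (rule oproj_unique_vec[OF proj_oproj[OF csubspace_osum[OF A B]] x])
  let ?a = "proj n A *\<^sub>v x" and ?b = "proj n B *\<^sub>v x"
  have aA: "?a \<in> A" and bB: "?b \<in> B" using proj_in A B x by blast+
  have ac: "?a \<in> carrier_vec n" and bc: "?b \<in> carrier_vec n" using A B x by simp_all
  show "?a + ?b \<in> osum A B" unfolding osum_def using aA bB by blast
  fix v assume "v \<in> osum A B"
  then obtain a b where ab: "a \<in> A" "b \<in> B" "v = a + b" unfolding osum_def by blast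
  have cc: "a \<in> carrier_vec n" "b \<in> carrier_vec n" using ab A B csubspace_carrier by blast+
  have e: "x - (?a + ?b) = (x - ?a) - ?b" "x - (?a + ?b) = (x - ?b) - ?a"
    using x ac bc by (rule vL_c, rule vL_d)
  have ba: "cinner b ?a = 0" using AB[OF aA ab(2)] cinner_cnj[OF ac cc(2)] by simp
  have "cinner a (x - (?a + ?b)) = 0"
    unfolding e(1) using x ac bc cc AB[OF ab(1) bB] proj_orth[OF A x ab(1)]
    by (simp add: cinner_minus_right[of _ n])
  moreover have "cinner b (x - (?a + ?b)) = 0"
    unfolding e(2) using x ac bc cc ba proj_orth[OF B x ab(2)]
    by (simp add: cinner_minus_right[of _ n])
  ultimately show "cinner v (x - (?a + ?b)) = 0"
    using ab cc by (simp add: cinner_add_left[of _ n])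
qed



lemma eigvec_in_invariant:
  assumes A: "A \<in> carrier_mat n n" and W: "csubspace n W" and inv: "\<And>w. w \<in> W \<Longrightarrow> A *\<^sub>v w \<in> W"
  and z: "z \<in> W" "z \<noteq> 0\<^sub>v n"
  shows "\<exists>x l. x \<in> W \<and> x \<noteq> 0\<^sub>v n \<and> A *\<^sub>v x = l \<cdot>\<^sub>v x"
proof -
  obtain p v where o: "orthonormal n W p v" and c: "ocomplete n W p v" using onb_exists[OF W] by blast
  have vc: "\<And>j. j < p \<Longrightarrow> v j \<in> carrier_vec n" using ortho_carrier[OF o] .
  have p: "p > 0"
  proof (rule ccontr)
    assume "\<not> p > 0" hence "p = 0" by simp
    thus False using c z unfolding ocomplete_def by auto
  qed
  define B where "B = mat p p (\<lambda>(j,k). cinner (v j) (A *\<^sub>v v k))"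
  have Bc: "B \<in> carrier_mat p p" by (simp add: B_def)
  obtain l where "l \<in> spectrum B" using spectrum_non_empty[OF Bc p] by blast
  then obtain c where cc: "c \<in> carrier_vec p" and c0: "c \<noteq> 0\<^sub>v p" and Bcl: "B *\<^sub>v c = l \<cdot>\<^sub>v c"
    unfolding spectrum_def eigenvalue_def eigenvector_def using Bc by auto
  define x where "x = lc n p (\<lambda>k. c $ k) v"
  have xW: "x \<in> W" unfolding x_def by (rule lc_in[OF W ortho_in[OF o]])
  have Avk: "A *\<^sub>v v k = lc n p (\<lambda>j. B $$ (j,k)) v" if k: "k < p" for k
  proof -
    have "A *\<^sub>v v k \<in> W" using inv ortho_in[OF o k] by blast
    hence "A *\<^sub>v v k = lc n p (\<lambda>j. cinner (v j) (A *\<^sub>v v k)) v" using c unfolding ocomplete_def by blast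
    also have "\<dots> = lc n p (\<lambda>j. B $$ (j,k)) v" by (rule lc_cong) (simp_all add: B_def k)
    finally show ?thesis .
  qed
  have Bj: "(\<Sum>k<p. B $$ (j,k) * c $ k) = l * c $ j" if j: "j < p" for j
  proof -
    have "(B *\<^sub>v c) $ j = l * c $ j" using Bcl j cc by simp
    thus ?thesis using j cc Bc by (simp add: scalar_prod_def atLeast0LessThan)
  qed
  have Ax: "A *\<^sub>v x = l \<cdot>\<^sub>v x"
  proof (rule eq_vecI)
    fix a assume "a < dim_vec (l \<cdot>\<^sub>v x)"
    hence a: "a < n" by (simp add: x_def)
    have "(A *\<^sub>v x) $ a = lc n p (\<lambda>k. c $ k) (\<lambda>k. A *\<^sub>v v k) $ a"
      unfolding x_def by (subst lc_mult[OF A vc]) simp_all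
    also have "\<dots> = (\<Sum>k<p. c $ k * (\<Sum>j<p. B $$ (j,k) * v j $ a))"
      using a Avk by (simp add: lc_def)
    also have "\<dots> = (\<Sum>j<p. (\<Sum>k<p. B $$ (j,k) * c $ k) * v j $ a)"
      by (simp add: sum_distrib_left sum_distrib_right mult_ac) (rule sum.swap)
    also have "\<dots> = (\<Sum>j<p. l * c $ j * v j $ a)" using Bj by simp
    also have "\<dots> = (l \<cdot>\<^sub>v x) $ a" using a by (simp add: x_def lc_def sum_distrib_left mult_ac)
    finally show "(A *\<^sub>v x) $ a = (l \<cdot>\<^sub>v x) $ a" .
  qed (use A in \<open>simp add: x_def\<close>)
  have x0: "x \<noteq> 0\<^sub>v n"
  proof
    assume x0: "x = 0\<^sub>v n"
    have "c = 0\<^sub>v p"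
    proof (rule eq_vecI)
      fix j assume "j < dim_vec (0\<^sub>v p :: complex vec)"
      hence j: "j < p" by simp
      have "c $ j = cinner (v j) x" unfolding x_def using cinner_lc_ortho[OF o j] by simp
      also have "\<dots> = 0" using x0 vc[OF j] by (simp add: cinner_zero_right)
      finally show "c $ j = 0\<^sub>v p $ j" using j by simp
    qed (use cc in simp)
    thus False using c0 by simp
  qed
  show ?thesis using xW x0 Ax by blast
qed

lemma herm_eig_real: assumes A: "A \<in> carrier_mat n n" and h: "adj A = A" and x: "x \<in> carrier_vec n"
  and x0: "x \<noteq> 0\<^sub>v n" and Ax: "A *\<^sub>v x = l \<cdot>\<^sub>v x"
  shows "l = complex_of_real (Re l)"
proof -
  have "l * cinner x x = cinner x (A *\<^sub>v x)" using x by (simp add: Ax cinner_smult_right[of _ n])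
  also have "\<dots> = cinner (A *\<^sub>v x) x" using cinner_herm[OF A h x x] .
  also have "\<dots> = cnj l * cinner x x" using x by (simp add: Ax cinner_smult_left[of _ n])
  finally have eq: "l * cinner x x = cnj l * cinner x x" .
  have "cinner x x \<noteq> 0" using cinner_self_pos[OF x x0] by auto
  hence "l = cnj l" using eq by simp
  hence "Im l = 0" by (simp add: complex_eq_iff)
  thus ?thesis by (simp add: complex_eq_iff)
qed

lemma spectral:
  assumes A: "A \<in> carrier_mat n n" and h: "adj A = A" and V: "csubspace n V"
  and inv: "\<And>v. v \<in> V \<Longrightarrow> A *\<^sub>v v \<in> V"
  shows "\<exists>m u e. orthonormal n V m u \<and> ocomplete n V m u \<and>
           (\<forall>j<m. A *\<^sub>v u j = complex_of_real (e j) \<cdot>\<^sub>v u j)"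
proof -
  let ?good = "\<lambda>m u. \<forall>j<m. \<exists>e::real. A *\<^sub>v u j = complex_of_real e \<cdot>\<^sub>v u j"
  have "\<exists>m u. orthonormal n V m u \<and> ?good m u \<and> ocomplete n V m u"
  proof (rule ext_family[where uu = undefined])
    fix m u assume o: "orthonormal n V m u" and g: "?good m u" and nc: "\<not> ocomplete n V m u"
    have uc: "\<And>k. k < m \<Longrightarrow> u k \<in> carrier_vec n" using ortho_carrier[OF o] .
    define W where "W = ocompl_in V (u ` {..<m})"
    have W: "csubspace n W" unfolding W_def
      by (rule csubspace_ocompl[OF V]) (use uc in auto)
    have WV: "W \<subseteq> V" by (auto simp: W_def ocompl_in_def)
    have Wmem: "w \<in> W \<longleftrightarrow> w \<in> V \<and> (\<forall>k<m. cinner (u k) w = 0)" for w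
      by (auto simp: W_def ocompl_in_def)
    obtain z where z: "z \<in> V" "z \<in> carrier_vec n" "cinner z z = 1" "\<forall>k<m. cinner (u k) z = 0"
      using inocomplete_vec[OF V o nc] by blast
    have zW: "z \<in> W" using z Wmem by blast
    have z0: "z \<noteq> 0\<^sub>v n" using z(3) by (auto simp: cinner_zero_left)
    have invW: "A *\<^sub>v w \<in> W" if w: "w \<in> W" for w
    proof -
      have wV: "w \<in> V" and wc: "w \<in> carrier_vec n" using w WV V csubspace_carrier by blast+
      have "cinner (u k) (A *\<^sub>v w) = 0" if k: "k < m" for k
      proof -
        obtain e where e: "A *\<^sub>v u k = complex_of_real e \<cdot>\<^sub>v u k" using g k by blast
        have "cinner (u k) (A *\<^sub>v w) = cinner (A *\<^sub>v u k) w" using cinner_herm[OF A h uc[OF k] wc] .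
        also have "\<dots> = cnj (complex_of_real e) * cinner (u k) w"
          unfolding e using uc[OF k] by (simp add: cinner_smult_left[of _ n])
        also have "\<dots> = 0" using w k Wmem by simp
        finally show ?thesis .
      qed
      thus ?thesis using inv[OF wV] Wmem by blast
    qed
    obtain x l where x: "x \<in> W" "x \<noteq> 0\<^sub>v n" "A *\<^sub>v x = l \<cdot>\<^sub>v x"
      using eigvec_in_invariant[OF A W invW zW z0] by blast
    have xc: "x \<in> carrier_vec n" using x(1) W csubspace_carrier by blast
    have lr: "l = complex_of_real (Re l)" using herm_eig_real[OF A h xc x(2,3)] .
    obtain c where c: "c \<noteq> 0" "cinner (c \<cdot>\<^sub>v x) (c \<cdot>\<^sub>v x) = 1" using normalize_vec[OF xc x(2)] by blast
    let ?x = "c \<cdot>\<^sub>v x"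
    have xW': "?x \<in> W" using csubspace_smult[OF W x(1)] .
    have xV: "?x \<in> V" and xc': "?x \<in> carrier_vec n" using xW' WV xc by auto
    have ux: "\<forall>k<m. cinner (u k) ?x = 0" using xW' Wmem by blast
    have Ax': "A *\<^sub>v ?x = complex_of_real (Re l) \<cdot>\<^sub>v ?x"
      using A xc x(3) lr by (simp add: mult_mat_vec smult_smult_assoc mult.commute)
    have "orthonormal n V (Suc m) (u(m := ?x))"
      using ortho_extend[OF o xV xc' c(2)] ux by blast
    moreover have "?good (Suc m) (u(m := ?x))"
      using g Ax' by (auto simp: less_Suc_eq)
    ultimately show "\<exists>u'. orthonormal n V (Suc m) u' \<and> ?good (Suc m) u'" by blast
  qed (auto intro: ortho_le)
  then obtain m u where mu: "orthonormal n V m u" "?good m u" "ocomplete n V m u" by blast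
  define e where "e = (\<lambda>j. SOME e::real. A *\<^sub>v u j = complex_of_real e \<cdot>\<^sub>v u j)"
  have "\<forall>j<m. A *\<^sub>v u j = complex_of_real (e j) \<cdot>\<^sub>v u j"
    using mu(2) unfolding e_def by (metis (mono_tags, lifting) someI_ex)
  thus ?thesis using mu by blast
qed



lemma csubspace_carrier_vec: "csubspace n (carrier_vec n)"
  by (auto simp: csubspace_def)

lemma did_SR_Suc: "did_SR n Ms S (Suc k) =
   (osum (fst (did_SR n Ms S k)) (ocompl_in (snd (did_SR n Ms S k))
      {v \<in> snd (did_SR n Ms S k). \<forall>M\<in>set Ms. proj n (fst (did_SR n Ms S k)) *\<^sub>v (M *\<^sub>v v) = 0\<^sub>v n}),
    {v \<in> snd (did_SR n Ms S k). \<forall>M\<in>set Ms. proj n (fst (did_SR n Ms S k)) *\<^sub>v (M *\<^sub>v v) = 0\<^sub>v n})"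
  by (simp add: Let_def)

lemma kernel_csubspace: assumes R: "csubspace n R" and Si: "csubspace n Si"
  and Ms: "\<And>M. M \<in> set Ms \<Longrightarrow> M \<in> carrier_mat n n"
  shows "csubspace n {v \<in> R. \<forall>M\<in>set Ms. proj n Si *\<^sub>v (M *\<^sub>v v) = 0\<^sub>v n}"
  unfolding csubspace_def
proof (intro conjI ballI allI)
  show "{v \<in> R. \<forall>M\<in>set Ms. proj n Si *\<^sub>v (M *\<^sub>v v) = 0\<^sub>v n} \<subseteq> carrier_vec n"
    using R csubspace_carrier by blast
  have "proj n Si *\<^sub>v (M *\<^sub>v 0\<^sub>v n) = 0\<^sub>v n" if "M \<in> set Ms" for M
  proof -
    have "M *\<^sub>v 0\<^sub>v n = 0\<^sub>v n" using Ms[OF that] by auto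
    moreover have "proj n Si *\<^sub>v 0\<^sub>v n = 0\<^sub>v n" using proj_carrier[OF Si] by auto
    ultimately show ?thesis by simp
  qed
  thus "0\<^sub>v n \<in> {v \<in> R. \<forall>M\<in>set Ms. proj n Si *\<^sub>v (M *\<^sub>v v) = 0\<^sub>v n}"
    using csubspace_zero[OF R] by blast
next
  fix u w assume u: "u \<in> {v \<in> R. \<forall>M\<in>set Ms. proj n Si *\<^sub>v (M *\<^sub>v v) = 0\<^sub>v n}"
    and w: "w \<in> {v \<in> R. \<forall>M\<in>set Ms. proj n Si *\<^sub>v (M *\<^sub>v v) = 0\<^sub>v n}"
  have uc: "u \<in> carrier_vec n" and wc: "w \<in> carrier_vec n" using u w R csubspace_carrier by blast+
  have "proj n Si *\<^sub>v (M *\<^sub>v (u + w)) = 0\<^sub>v n" if M: "M \<in> set Ms" for M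
  proof -
    have Mc: "M \<in> carrier_mat n n" using Ms[OF M] .
    have "proj n Si *\<^sub>v (M *\<^sub>v (u + w)) = proj n Si *\<^sub>v (M *\<^sub>v u) + proj n Si *\<^sub>v (M *\<^sub>v w)"
      using Mc uc wc proj_carrier[OF Si]
      by (simp add: mult_add_distrib_mat_vec[of _ n n])
    thus ?thesis using u w M by simp
  qed
  thus "u + w \<in> {v \<in> R. \<forall>M\<in>set Ms. proj n Si *\<^sub>v (M *\<^sub>v v) = 0\<^sub>v n}"
    using csubspace_add[OF R] u w by blast
next
  fix c :: complex and w assume w: "w \<in> {v \<in> R. \<forall>M\<in>set Ms. proj n Si *\<^sub>v (M *\<^sub>v v) = 0\<^sub>v n}"
  have wc: "w \<in> carrier_vec n" using w R csubspace_carrier by blast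
  have "proj n Si *\<^sub>v (M *\<^sub>v (c \<cdot>\<^sub>v w)) = 0\<^sub>v n" if M: "M \<in> set Ms" for M
  proof -
    have Mc: "M \<in> carrier_mat n n" using Ms[OF M] .
    have "proj n Si *\<^sub>v (M *\<^sub>v (c \<cdot>\<^sub>v w)) = c \<cdot>\<^sub>v (proj n Si *\<^sub>v (M *\<^sub>v w))"
      using Mc wc proj_carrier[OF Si] by (simp add: mult_mat_vec[of _ n n])
    moreover have "c \<cdot>\<^sub>v 0\<^sub>v n = (0\<^sub>v n :: complex vec)" by (intro eq_vecI) auto
    ultimately show ?thesis using w M by simp
  qed
  thus "c \<cdot>\<^sub>v w \<in> {v \<in> R. \<forall>M\<in>set Ms. proj n Si *\<^sub>v (M *\<^sub>v v) = 0\<^sub>v n}"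
    using csubspace_smult[OF R] w by blast
qed

lemma did_inv: assumes S: "csubspace n S" and Ms: "\<And>M. M \<in> set Ms \<Longrightarrow> M \<in> carrier_mat n n"
  shows "csubspace n (fst (did_SR n Ms S k)) \<and> csubspace n (snd (did_SR n Ms S k)) \<and>
    (\<forall>s\<in>fst (did_SR n Ms S k). \<forall>r\<in>snd (did_SR n Ms S k). cinner s r = 0)"
proof (induction k)
  case 0
  have "csubspace n (ocompl_in (carrier_vec n) S)"
    by (rule csubspace_ocompl[OF csubspace_carrier_vec]) (use S csubspace_carrier in blast)
  thus ?case using S by (auto simp: ocompl_in_def)
next
  case (Suc k)
  let ?S = "fst (did_SR n Ms S k)" and ?R = "snd (did_SR n Ms S k)"
  let ?Rn = "{v \<in> ?R. \<forall>M\<in>set Ms. proj n ?S *\<^sub>v (M *\<^sub>v v) = 0\<^sub>v n}"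
  have Sk: "csubspace n ?S" and Rk: "csubspace n ?R" and orth: "\<forall>s\<in>?S. \<forall>r\<in>?R. cinner s r = 0"
    using Suc by auto
  have Rn: "csubspace n ?Rn" by (rule kernel_csubspace[OF Rk Sk Ms])
  have T: "csubspace n (ocompl_in ?R ?Rn)"
    by (rule csubspace_ocompl[OF Rk]) (use Rn csubspace_carrier in blast)
  have S': "csubspace n (osum ?S (ocompl_in ?R ?Rn))" by (rule csubspace_osum[OF Sk T])
  have o: "cinner x r = 0" if x: "x \<in> osum ?S (ocompl_in ?R ?Rn)" and r: "r \<in> ?Rn" for x r
  proof -
    obtain s t where st: "s \<in> ?S" "t \<in> ocompl_in ?R ?Rn" "x = s + t" using x unfolding osum_def by blast
    have sc: "s \<in> carrier_vec n" and tc: "t \<in> carrier_vec n" and rc: "r \<in> carrier_vec n"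
      using st Sk T Rn r csubspace_carrier by blast+
    have "cinner s r = 0" using orth st r by auto
    moreover have "cinner r t = 0" using st r by (auto simp: ocompl_in_def)
    hence "cinner t r = 0" using cinner_cnj[OF rc tc] by simp
    ultimately show ?thesis using st sc tc by (simp add: cinner_add_left[of _ n])
  qed
  show ?case unfolding did_SR_Suc using S' Rn o by simp
qed

context
  fixes n :: nat and Ms :: "complex mat list" and S :: "complex vec set"
  assumes S: "csubspace n S" and Ms: "\<And>M. M \<in> set Ms \<Longrightarrow> M \<in> carrier_mat n n"
begin

abbreviation "SS k \<equiv> fst (did_SR n Ms S k)"
abbreviation "RR k \<equiv> snd (did_SR n Ms S k)"

lemma SS_sub: "csubspace n (SS k)" using did_inv[OF S Ms] by blast
lemma RR_sub: "csubspace n (RR k)" using did_inv[OF S Ms] by blast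
lemma SR_orth: "s \<in> SS k \<Longrightarrow> r \<in> RR k \<Longrightarrow> cinner s r = 0" using did_inv[OF S Ms] by blast

lemma RR_Suc: "RR (Suc k) = {v \<in> RR k. \<forall>M\<in>set Ms. proj n (SS k) *\<^sub>v (M *\<^sub>v v) = 0\<^sub>v n}"
  by (simp add: Let_def)

lemma RR_mono: "RR (Suc k) \<subseteq> RR k" unfolding RR_Suc by blast

lemma did_T_Suc: "did_T n Ms S (Suc k) = ocompl_in (RR k) (RR (Suc k))"
  by (simp add: did_T_def did_R_def)

lemma did_T_0: "did_T n Ms S 0 = S" by (simp add: did_T_def)

lemma SS_Suc: "SS (Suc k) = osum (SS k) (did_T n Ms S (Suc k))"
  by (simp add: Let_def did_T_def did_R_def)

lemma did_T_sub: "csubspace n (did_T n Ms S i)"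
proof (cases i)
  case 0 thus ?thesis using S by (simp add: did_T_0)
next
  case (Suc k)
  show ?thesis unfolding Suc did_T_Suc
    by (rule csubspace_ocompl[OF RR_sub]) (use RR_sub csubspace_carrier in blast)
qed

lemma did_T_Suc_mem: "v \<in> did_T n Ms S (Suc k) \<longleftrightarrow> v \<in> RR k \<and> (\<forall>r\<in>RR (Suc k). cinner r v = 0)"
  by (simp add: did_T_Suc ocompl_in_def)

lemma posdef_core: assumes v: "v \<in> did_T n Ms S (Suc k)" and v0: "v \<noteq> 0\<^sub>v n"
  shows "\<exists>M\<in>set Ms. proj n (did_T n Ms S k) *\<^sub>v (M *\<^sub>v v) \<noteq> 0\<^sub>v n"
proof -
  have vR: "v \<in> RR k" and vperp: "\<forall>r\<in>RR (Suc k). cinner r v = 0" using v did_T_Suc_mem by auto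
  have vc: "v \<in> carrier_vec n" using vR RR_sub csubspace_carrier by blast
  have "v \<notin> RR (Suc k)"
  proof
    assume "v \<in> RR (Suc k)"
    hence "cinner v v = 0" using vperp by blast
    thus False using cinner_self_zero[OF vc] v0 by blast
  qed
  then obtain M where M: "M \<in> set Ms" and nz: "proj n (SS k) *\<^sub>v (M *\<^sub>v v) \<noteq> 0\<^sub>v n"
    using vR unfolding RR_Suc by blast
  have Mv: "M *\<^sub>v v \<in> carrier_vec n" using Ms[OF M] vc by simp
  show ?thesis
  proof (cases k)
    case 0 thus ?thesis using M nz by (auto simp: did_T_0)
  next
    case (Suc k')
    have orth: "cinner a b = 0" if "a \<in> SS k'" "b \<in> did_T n Ms S (Suc k')" for a b
      using that SR_orth did_T_Suc_mem by blast
    have "proj n (SS k) *\<^sub>v (M *\<^sub>v v) = proj n (SS k') *\<^sub>v (M *\<^sub>v v) + proj n (did_T n Ms S k) *\<^sub>v (M *\<^sub>v v)"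
      unfolding Suc SS_Suc by (rule proj_osum[OF SS_sub did_T_sub orth Mv])
    moreover have "proj n (SS k') *\<^sub>v (M *\<^sub>v v) = 0\<^sub>v n" using vR M unfolding Suc RR_Suc by blast
    ultimately have "proj n (SS k) *\<^sub>v (M *\<^sub>v v) = proj n (did_T n Ms S k) *\<^sub>v (M *\<^sub>v v)"
      using did_T_sub Mv by simp
    thus ?thesis using M nz by auto
  qed
qed

lemma T_nonzero: assumes ne: "RR (Suc k) \<noteq> RR k"
  shows "\<exists>w. w \<in> did_T n Ms S (Suc k) \<and> w \<noteq> 0\<^sub>v n"
proof -
  obtain v where v: "v \<in> RR k" "v \<notin> RR (Suc k)" using ne RR_mono by blast
  have R1: "csubspace n (RR (Suc k))" by (rule RR_sub)
  have vc: "v \<in> carrier_vec n" using v RR_sub csubspace_carrier by blast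
  let ?p = "proj n (RR (Suc k)) *\<^sub>v v"
  have pR: "?p \<in> RR (Suc k)" using proj_in[OF R1 vc] .
  have pc: "?p \<in> carrier_vec n" using R1 vc by simp
  define w where "w = v - ?p"
  have wR: "w \<in> RR k" unfolding w_def using csubspace_minus[OF RR_sub v(1)] pR RR_mono by blast
  have wp: "\<forall>r\<in>RR (Suc k). cinner r w = 0" unfolding w_def using proj_orth[OF R1 vc] by blast
  have "w \<noteq> 0\<^sub>v n"
  proof
    assume "w = 0\<^sub>v n"
    hence "?p = v" using vL_e[OF vc pc] by (simp add: w_def)
    thus False using pR v by simp
  qed
  thus ?thesis using wR wp did_T_Suc_mem by blast
qed

end

lemma foldr_carrier: "(\<And>M. M \<in> set Ms \<Longrightarrow> f M \<in> carrier_mat n n) \<Longrightarrow>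
  foldr (\<lambda>M acc. f M + acc) Ms (0\<^sub>m n n) \<in> carrier_mat n n"
  by (induction Ms) auto

lemma foldr_cinner: assumes "\<And>M. M \<in> set Ms \<Longrightarrow> f M \<in> carrier_mat n n" and v: "v \<in> carrier_vec n"
  shows "cinner v (foldr (\<lambda>M acc. f M + acc) Ms (0\<^sub>m n n) *\<^sub>v v) = (\<Sum>M\<leftarrow>Ms. cinner v (f M *\<^sub>v v))"
  using assms(1)
proof (induction Ms)
  case Nil
  have "0\<^sub>m n n *\<^sub>v v = 0\<^sub>v n" using v by (intro eq_vecI) (auto simp: scalar_prod_def)
  thus ?case using v by (simp add: cinner_zero_right)
next
  case (Cons M Ms)
  have fc: "f M \<in> carrier_mat n n" using Cons by simp
  have Fc: "foldr (\<lambda>M acc. f M + acc) Ms (0\<^sub>m n n) \<in> carrier_mat n n"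
    using Cons foldr_carrier by (metis list.set_intros(2))
  show ?case using Cons fc Fc v
    by (simp add: add_mult_distrib_mat_vec[OF fc Fc v] cinner_add_right[OF v mult_mat_vec_carrier[OF fc v] mult_mat_vec_carrier[OF Fc v]])
qed

lemma foldr_adj: assumes "\<And>M. M \<in> set Ms \<Longrightarrow> f M \<in> carrier_mat n n" and "\<And>M. M \<in> set Ms \<Longrightarrow> adj (f M) = f M"
  shows "adj (foldr (\<lambda>M acc. f M + acc) Ms (0\<^sub>m n n)) = foldr (\<lambda>M acc. f M + acc) Ms (0\<^sub>m n n)"
  using assms
proof (induction Ms)
  case (Cons M Ms)
  have Fc: "foldr (\<lambda>M acc. f M + acc) Ms (0\<^sub>m n n) \<in> carrier_mat n n"
    using Cons foldr_carrier by (metis list.set_intros(2))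
  show ?case using Cons Fc by (simp add: adj_add[of _ n n])
qed simp

lemma foldr_right: assumes "\<And>M. M \<in> set Ms \<Longrightarrow> f M \<in> carrier_mat n n" and X: "X \<in> carrier_mat n n"
  and "\<And>M. M \<in> set Ms \<Longrightarrow> f M * X = f M"
  shows "foldr (\<lambda>M acc. f M + acc) Ms (0\<^sub>m n n) * X = foldr (\<lambda>M acc. f M + acc) Ms (0\<^sub>m n n)"
  using assms(1,3)
proof (induction Ms)
  case Nil thus ?case using X by simp
next
  case (Cons M Ms)
  have Fc: "foldr (\<lambda>M acc. f M + acc) Ms (0\<^sub>m n n) \<in> carrier_mat n n"
    using Cons foldr_carrier by (metis list.set_intros(2))
  have fc: "f M \<in> carrier_mat n n" using Cons by simp
  show ?case using Cons Fc X by (simp add: add_mult_distrib_mat[OF fc Fc X])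
qed

lemma foldr_left: assumes "\<And>M. M \<in> set Ms \<Longrightarrow> f M \<in> carrier_mat n n" and X: "X \<in> carrier_mat n n"
  and "\<And>M. M \<in> set Ms \<Longrightarrow> X * f M = f M"
  shows "X * foldr (\<lambda>M acc. f M + acc) Ms (0\<^sub>m n n) = foldr (\<lambda>M acc. f M + acc) Ms (0\<^sub>m n n)"
  using assms(1,3)
proof (induction Ms)
  case Nil thus ?case using X by simp
next
  case (Cons M Ms)
  have Fc: "foldr (\<lambda>M acc. f M + acc) Ms (0\<^sub>m n n) \<in> carrier_mat n n"
    using Cons foldr_carrier by (metis list.set_intros(2))
  have fc: "f M \<in> carrier_mat n n" using Cons by simp
  show ?case using Cons Fc X by (simp add: mult_add_distrib_mat[OF X fc Fc])
qed

lemma foldr_trace_left: assumes "\<And>M. M \<in> set Ms \<Longrightarrow> f M \<in> carrier_mat n n" and X: "X \<in> carrier_mat n n"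
  shows "mtrace (X * foldr (\<lambda>M acc. f M + acc) Ms (0\<^sub>m n n)) = (\<Sum>M\<leftarrow>Ms. mtrace (X * f M))"
  using assms(1)
proof (induction Ms)
  case Nil thus ?case using X by simp
next
  case (Cons M Ms)
  have Fc: "foldr (\<lambda>M acc. f M + acc) Ms (0\<^sub>m n n) \<in> carrier_mat n n"
    using Cons foldr_carrier by (metis list.set_intros(2))
  have fc: "f M \<in> carrier_mat n n" using Cons by simp
  have "mtrace (X * (f M + foldr (\<lambda>M acc. f M + acc) Ms (0\<^sub>m n n))) =
    mtrace (X * f M) + mtrace (X * foldr (\<lambda>M acc. f M + acc) Ms (0\<^sub>m n n))"
    using Fc X fc by (simp add: mult_add_distrib_mat[OF X fc Fc] mtrace_add[of _ n])
  thus ?case using Cons by simp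
qed

lemma foldr_trace_right: assumes "\<And>M. M \<in> set Ms \<Longrightarrow> f M \<in> carrier_mat n n" and X: "X \<in> carrier_mat n n"
  shows "mtrace (foldr (\<lambda>M acc. f M + acc) Ms (0\<^sub>m n n) * X) = (\<Sum>M\<leftarrow>Ms. mtrace (f M * X))"
  using assms(1)
proof (induction Ms)
  case Nil thus ?case using X by (simp add: mtrace_def)
next
  case (Cons M Ms)
  have Fc: "foldr (\<lambda>M acc. f M + acc) Ms (0\<^sub>m n n) \<in> carrier_mat n n"
    using Cons foldr_carrier by (metis list.set_intros(2))
  have fc: "f M \<in> carrier_mat n n" using Cons by simp
  have "mtrace ((f M + foldr (\<lambda>M acc. f M + acc) Ms (0\<^sub>m n n)) * X) =
    mtrace (f M * X) + mtrace (foldr (\<lambda>M acc. f M + acc) Ms (0\<^sub>m n n) * X)"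
    using Fc X fc by (simp add: add_mult_distrib_mat[OF fc Fc X] mtrace_add[of _ n])
  thus ?case using Cons by simp
qed

lemma Im_sum_list: "(\<And>x. x \<in> set xs \<Longrightarrow> Im (f x) = 0) \<Longrightarrow> Im (\<Sum>x\<leftarrow>xs. f x) = 0"
  by (induction xs) auto

lemma Re_sum_list: "Re (\<Sum>x\<leftarrow>xs. f x) = (\<Sum>x\<leftarrow>xs. Re (f x))"
  by (induction xs) auto

lemma sum_list_ge_member: "(\<And>x. x \<in> set xs \<Longrightarrow> (f x::real) \<ge> 0) \<Longrightarrow> y \<in> set xs \<Longrightarrow> f y \<le> (\<Sum>x\<leftarrow>xs. f x)"
proof (induction xs)
  case (Cons a xs)
  have s0: "0 \<le> (\<Sum>x\<leftarrow>xs. f x)" using Cons by (intro sum_list_nonneg) auto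
  have a0: "0 \<le> f a" using Cons.prems by auto
  show ?case
  proof (cases "y = a")
    case True thus ?thesis using s0 by simp
  next
    case False
    hence "f y \<le> (\<Sum>x\<leftarrow>xs. f x)" using Cons by auto
    thus ?thesis using a0 by simp
  qed
qed simp



lemma mult_carrier_nn[simp]: "A \<in> carrier_mat n n \<Longrightarrow> B \<in> carrier_mat n n \<Longrightarrow> A * B \<in> carrier_mat n n"
  by (metis mult_carrier_mat)

lemma trace_M: fixes Q P M \<rho> :: "complex mat"
  assumes Q: "Q \<in> carrier_mat n n" and P: "P \<in> carrier_mat n n" and M: "M \<in> carrier_mat n n"
  and r: "\<rho> \<in> carrier_mat n n" and QQ: "Q * Q = Q" and aQ: "adj Q = Q" and aP: "adj P = P"
  and rP: "P * \<rho> * P = \<rho>"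
  shows "mtrace (Q * (M * \<rho> * adj M)) = mtrace (adj (Q * M * P) * (Q * M * P) * \<rho>)"
proof -
  let ?X = "M * \<rho> * adj M" and ?N = "Q * M * P"
  have X: "?X \<in> carrier_mat n n" using M r by simp
  have N: "?N \<in> carrier_mat n n" using Q M P by simp
  have aN: "adj ?N = P * adj M * Q"
    using Q M P aQ aP by (simp add: adj_mult[of _ n n _ n])
  have aNc: "adj ?N \<in> carrier_mat n n" using N by simp
  have NRc: "?N * \<rho> \<in> carrier_mat n n" using N r by simp
  have "mtrace (Q * ?X) = mtrace ((Q * Q) * ?X)" using QQ by simp
  also have "\<dots> = mtrace (Q * (Q * ?X))" using Q X by simp
  also have "\<dots> = mtrace ((Q * ?X) * Q)" using Q X by (intro mtrace_comm[of _ n n]) auto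
  also have "(Q * ?X) * Q = Q * (M * (P * \<rho> * P) * adj M) * Q" using rP by simp
  also have "\<dots> = ?N * \<rho> * adj ?N" unfolding aN using Q M P r by (simp add: assoc_mult_mat[of _ n n _ n _ n])
  also have "mtrace (?N * \<rho> * adj ?N) = mtrace (adj ?N * (?N * \<rho>))"
    by (rule mtrace_comm[OF NRc aNc])
  also have "adj ?N * (?N * \<rho>) = adj ?N * ?N * \<rho>" using assoc_mult_mat[OF aNc N r] by simp
  finally show ?thesis .
qed

lemma trace_pmat: assumes X: "X \<in> carrier_mat n n" and u: "\<And>j. j < m \<Longrightarrow> u j \<in> carrier_vec n"
  shows "mtrace (X * pmat n m u) = (\<Sum>j<m. cinner (u j) (X *\<^sub>v u j))"
proof -
  have ud: "\<And>j. j < m \<Longrightarrow> dim_vec (u j) = n" using u by auto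
  have "mtrace (X * pmat n m u) = (\<Sum>a<n. \<Sum>b<n. X $$ (a,b) * (\<Sum>j<m. u j $ b * cnj (u j $ a)))"
    using X by (simp add: mtrace_def pmat_def scalar_prod_def atLeast0LessThan)
  also have "\<dots> = (\<Sum>a<n. \<Sum>j<m. \<Sum>b<n. X $$ (a,b) * (u j $ b * cnj (u j $ a)))"
    apply (simp add: sum_distrib_left)
    apply (rule sum.cong[OF refl])
    apply (rule sum.swap)
    done
  also have "\<dots> = (\<Sum>j<m. \<Sum>a<n. \<Sum>b<n. X $$ (a,b) * (u j $ b * cnj (u j $ a)))"
    by (rule sum.swap)
  also have "\<dots> = (\<Sum>j<m. cinner (u j) (X *\<^sub>v u j))"
    using X ud by (auto simp: cinner_def scalar_prod_def atLeast0LessThan sum_distrib_left mult_ac intro!: sum.cong)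
  finally show ?thesis .
qed

definition rk :: "nat \<Rightarrow> complex vec \<Rightarrow> complex mat" where
  "rk n u = mat n n (\<lambda>(a,b). u $ a * cnj (u $ b))"

lemma rk_carrier[simp]: "rk n u \<in> carrier_mat n n" by (simp add: rk_def)

lemma rk_mult_vec: assumes u: "u \<in> carrier_vec n" and x: "x \<in> carrier_vec n"
  shows "rk n u *\<^sub>v x = cinner u x \<cdot>\<^sub>v u"
  by (intro eq_vecI) (use u x in \<open>auto simp: rk_def scalar_prod_def cinner_def sum_distrib_left mult_ac atLeast0LessThan\<close>)

lemma rk_density: assumes u: "u \<in> carrier_vec n" and uu: "cinner u u = 1"
  shows "density n (rk n u)"
proof -
  have h: "adj (rk n u) = rk n u" by (intro eq_matI) (auto simp: rk_def mult.commute)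
  have q: "Im (cinner v (rk n u *\<^sub>v v)) = 0 \<and> Re (cinner v (rk n u *\<^sub>v v)) \<ge> 0" if v: "v \<in> carrier_vec n" for v
  proof -
    have "cinner v (rk n u *\<^sub>v v) = cinner u v * cinner v u"
      using u v by (simp add: rk_mult_vec cinner_smult_right[of _ n])
    also have "\<dots> = cinner u v * cnj (cinner u v)" using cinner_cnj[OF u v] by simp
    also have "\<dots> = complex_of_real ((cmod (cinner u v))^2)" by (simp only: complex_norm_square)
    finally show ?thesis by simp
  qed
  have t: "mtrace (rk n u) = 1"
  proof -
    have "mtrace (rk n u) = (\<Sum>a<n. cnj (u $ a) * u $ a)"
      by (simp add: mtrace_def rk_def mult.commute)
    also have "\<dots> = cinner u u" using u by (simp add: cinner_carrier)
    finally show ?thesis using uu by simp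
  qed
  show ?thesis unfolding density_def psd_def using h q t by simp
qed



lemma mult_vec_carrier_nn[simp]: "A \<in> carrier_mat n n \<Longrightarrow> v \<in> carrier_vec n \<Longrightarrow> A *\<^sub>v v \<in> carrier_vec n"
  by (metis mult_mat_vec_carrier)

lemma mult_mat_vec_nn[simp]: "A \<in> carrier_mat n n \<Longrightarrow> B \<in> carrier_mat n n \<Longrightarrow> v \<in> carrier_vec n \<Longrightarrow>
  (A * B) *\<^sub>v v = A *\<^sub>v (B *\<^sub>v v)"
  by (metis assoc_mult_mat_vec)

theorem mainTheorem6:
  fixes n N i :: nat and Ms :: "complex mat list" and S :: "complex vec set"
  assumes "is_kraus n Ms"
    and "csubspace n S"
    and "invariant_subspace n Ms S"
    and "did_success n Ms S N"
    and "1 \<le> i" and "i \<le> N"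
  shows "pos_def_on (did_T n Ms S i) (did_G n Ms S i) \<and>
    (let Ti = did_T n Ms S i; Pi = proj n Ti; Pj = proj n (did_T n Ms S (i - 1));
         lmin = Min (eigs_on Ti (did_G n Ms S i)); lmax = Max (eigs_on Ti (did_G n Ms S i));
         tr = (\<lambda>\<rho>. mtrace (Pj * kraus_map n Ms \<rho>))
     in (\<forall>\<rho>. density n \<rho> \<and> Pi * \<rho> * Pi = \<rho> \<longrightarrow>
            Im (tr \<rho>) = 0 \<and> lmin \<le> Re (tr \<rho>) \<and> Re (tr \<rho>) \<le> lmax)
        \<and> lmax \<le> 1
        \<and> (\<exists>\<rho>. density n \<rho> \<and> Pi * \<rho> * Pi = \<rho> \<and> tr \<rho> = complex_of_real lmin)
        \<and> (\<exists>\<rho>. density n \<rho> \<and> Pi * \<rho> * Pi = \<rho> \<and> tr \<rho> = complex_of_real lmax))"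
proof -
  have Ms: "\<And>M. M \<in> set Ms \<Longrightarrow> M \<in> carrier_mat n n" using assms(1) by (simp add: is_kraus_def)
  have KK: "foldr (\<lambda>M acc. adj M * M + acc) Ms (0\<^sub>m n n) = 1\<^sub>m n" using assms(1) by (simp add: is_kraus_def)
  have S: "csubspace n S" by fact
  obtain k where ik: "i = Suc k" using assms(5) by (cases i) auto
  define T where "T = did_T n Ms S i"
  define T0 where "T0 = did_T n Ms S (i - 1)"
  have TS: "csubspace n T" "csubspace n T0" using did_T_sub[OF S Ms] by (simp_all add: T_def T0_def)
  define P where "P = proj n T"
  define Q where "Q = proj n T0"
  have Pc: "P \<in> carrier_mat n n" and Qc: "Q \<in> carrier_mat n n" using TS by (simp_all add: P_def Q_def)
  have aP: "adj P = P" and aQ: "adj Q = Q" using TS by (simp_all add: P_def Q_def proj_herm)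
  have PP: "P * P = P" and QQ: "Q * Q = Q" using TS by (simp_all add: P_def Q_def proj_idem)
  define N where "N = (\<lambda>M. Q * M * P)"
  define f where "f = (\<lambda>M. adj (N M) * N M)"
  define G where "G = did_G n Ms S i"
  have G': "G = foldr (\<lambda>M acc. f M + acc) Ms (0\<^sub>m n n)"
    unfolding G_def did_G_def f_def N_def Q_def P_def T0_def T_def ..
  have Nc: "N M \<in> carrier_mat n n" if "M \<in> set Ms" for M using Ms[OF that] Pc Qc by (simp add: N_def)
  have fc: "f M \<in> carrier_mat n n" if "M \<in> set Ms" for M using Nc[OF that] by (simp add: f_def)
  have Gc: "G \<in> carrier_mat n n" using foldr_carrier[of Ms f n] fc G' by simp
  have fh: "adj (f M) = f M" if "M \<in> set Ms" for M
    using Nc[OF that] by (simp add: f_def adj_mult[of _ n n _ n])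
  have Gh: "adj G = G" unfolding G' by (rule foldr_adj[OF fc fh])
  have NP: "N M * P = N M" if "M \<in> set Ms" for M
  proof -
    have "N M * P = Q * M * (P * P)" using Ms[OF that] Pc Qc by (simp add: N_def assoc_mult_mat[of _ n n _ n _ n])
    thus ?thesis using PP by (simp add: N_def)
  qed
  have PaN: "P * adj (N M) = adj (N M)" if "M \<in> set Ms" for M
  proof -
    have "adj (N M * P) = adj P * adj (N M)" using Nc[OF that] Pc by (simp add: adj_mult[of _ n n _ n])
    thus ?thesis using NP[OF that] aP by simp
  qed
  have fP: "f M * P = f M" if "M \<in> set Ms" for M
    using Nc[OF that] Pc NP[OF that] by (simp add: f_def assoc_mult_mat[of "adj (N M)" n n "N M" n P n])
  have Pf: "P * f M = f M" if "M \<in> set Ms" for M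
  proof -
    have "P * f M = (P * adj (N M)) * N M" using Nc[OF that] Pc
      by (simp add: f_def assoc_mult_mat[of P n n "adj (N M)" n "N M" n])
    thus ?thesis using PaN[OF that] by (simp add: f_def)
  qed
  have GP: "G * P = G" unfolding G' by (rule foldr_right[OF fc Pc fP])
  have PG: "P * G = G" unfolding G' by (rule foldr_left[OF fc Pc Pf])
  have GT: "G *\<^sub>v x \<in> T" if x: "x \<in> carrier_vec n" for x
  proof -
    have "G *\<^sub>v x = P *\<^sub>v (G *\<^sub>v x)" using PG Pc Gc x by (metis assoc_mult_mat_vec)
    thus ?thesis using proj_in[OF TS(1), of "G *\<^sub>v x"] Gc x by (simp add: P_def)
  qed
  have fquad: "cinner v (f M *\<^sub>v v) = cinner (N M *\<^sub>v v) (N M *\<^sub>v v)" if M: "M \<in> set Ms" and v: "v \<in> carrier_vec n" for M v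
  proof -
    have "cinner v (f M *\<^sub>v v) = cinner v (adj (N M) *\<^sub>v (N M *\<^sub>v v))"
      using Nc[OF M] v by (simp add: f_def assoc_mult_mat_vec[of "adj (N M)" n n "N M" n v])
    also have "\<dots> = cinner (N M *\<^sub>v v) (N M *\<^sub>v v)"
      using cinner_adj[of "adj (N M)" n v "N M *\<^sub>v v"] Nc[OF M] v by simp
    finally show ?thesis .
  qed
  have Gquad: "cinner v (G *\<^sub>v v) = (\<Sum>M\<leftarrow>Ms. cinner (N M *\<^sub>v v) (N M *\<^sub>v v))" if v: "v \<in> carrier_vec n" for v
  proof -
    have "cinner v (G *\<^sub>v v) = (\<Sum>M\<leftarrow>Ms. cinner v (f M *\<^sub>v v))"
      unfolding G' by (rule foldr_cinner[OF fc v])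
    also have "\<dots> = (\<Sum>M\<leftarrow>Ms. cinner (N M *\<^sub>v v) (N M *\<^sub>v v))"
      using fquad v by (intro arg_cong[where f = sum_list] map_cong) auto
    finally show ?thesis .
  qed
  have NT: "N M *\<^sub>v v = Q *\<^sub>v (M *\<^sub>v v)" if M: "M \<in> set Ms" and v: "v \<in> T" for M v
  proof -
    have vc: "v \<in> carrier_vec n" using v TS(1) csubspace_carrier by blast
    have "N M *\<^sub>v v = Q *\<^sub>v (M *\<^sub>v (P *\<^sub>v v))" using Ms[OF M] Pc Qc vc by (simp add: N_def)
    thus ?thesis using proj_fix[OF TS(1) v] by (simp add: P_def)
  qed
  have posdef: "pos_def_on T G"
    unfolding pos_def_on_def
  proof (intro ballI impI conjI)
    fix v assume v: "v \<in> T" and v0': "v \<noteq> 0\<^sub>v (dim_vec v)"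
    have vc: "v \<in> carrier_vec n" using v TS(1) csubspace_carrier by blast
    have v0: "v \<noteq> 0\<^sub>v n" using v0' vc by simp
    show "Im (cinner v (G *\<^sub>v v)) = 0" unfolding Gquad[OF vc] by (rule Im_sum_list) (simp add: cinner_self_Im)
    have vT: "v \<in> did_T n Ms S (Suc k)" using v by (simp add: T_def ik)
    obtain M where M: "M \<in> set Ms" and nz: "proj n (did_T n Ms S k) *\<^sub>v (M *\<^sub>v v) \<noteq> 0\<^sub>v n"
      using posdef_core[OF S Ms vT v0] by blast
    have "N M *\<^sub>v v \<noteq> 0\<^sub>v n" using nz NT[OF M v] by (simp add: Q_def T0_def ik)
    hence pos: "Re (cinner (N M *\<^sub>v v) (N M *\<^sub>v v)) > 0"
      using cinner_self_pos Nc[OF M] vc by (metis mult_mat_vec_carrier)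
    have "Re (cinner (N M *\<^sub>v v) (N M *\<^sub>v v)) \<le> (\<Sum>M\<leftarrow>Ms. Re (cinner (N M *\<^sub>v v) (N M *\<^sub>v v)))"
      by (rule sum_list_ge_member[OF _ M]) (simp add: cinner_self_Re)
    thus "Re (cinner v (G *\<^sub>v v)) > 0" using pos unfolding Gquad[OF vc] Re_sum_list by linarith
  qed
  obtain m u e where o: "orthonormal n T m u" and cpl: "ocomplete n T m u"
    and eig: "\<forall>j<m. G *\<^sub>v u j = complex_of_real (e j) \<cdot>\<^sub>v u j"
    using spectral[OF Gc Gh TS(1)] GT TS(1) csubspace_carrier by blast
  have uc: "\<And>j. j < m \<Longrightarrow> u j \<in> carrier_vec n" using ortho_carrier[OF o] .
  have uT: "\<And>j. j < m \<Longrightarrow> u j \<in> T" using ortho_in[OF o] .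
  have Pm: "P = pmat n m u" using proj_eq[OF TS(1) onb_oproj[OF TS(1) o cpl]] by (simp add: P_def)
  have ne0: "did_R n Ms S (Suc i) \<noteq> did_R n Ms S i"
    using assms(4,5,6) unfolding did_success_def by auto
  have ne: "snd (did_SR n Ms S (Suc k)) \<noteq> snd (did_SR n Ms S k)"
    using ne0 unfolding did_R_def ik diff_Suc_1 .
  obtain w where w: "w \<in> T" "w \<noteq> 0\<^sub>v n" using T_nonzero[OF S Ms ne] by (auto simp: T_def ik)
  have m0: "m > 0"
  proof (rule ccontr)
    assume "\<not> m > 0" hence "m = 0" by simp
    thus False using cpl w unfolding ocomplete_def by auto
  qed
  have eigs: "eigs_on T G = e ` {..<m}"
  proof
    show "e ` {..<m} \<subseteq> eigs_on T G"
    proof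
      fix l assume "l \<in> e ` {..<m}"
      then obtain j where j: "j < m" and l: "l = e j" by blast
      have "u j \<noteq> 0\<^sub>v n" using ortho_inner[OF o j j] by (auto simp: cinner_zero_left)
      moreover have "dim_vec (u j) = n" using uc[OF j] by simp
      ultimately show "l \<in> eigs_on T G" unfolding eigs_on_def using uT[OF j] eig j l
        by (intro CollectI bexI[of _ "u j"]) auto
    qed
    show "eigs_on T G \<subseteq> e ` {..<m}"
    proof
      fix l assume "l \<in> eigs_on T G"
      then obtain v where v: "v \<in> T" and v0': "v \<noteq> 0\<^sub>v (dim_vec v)" and Gv: "G *\<^sub>v v = complex_of_real l \<cdot>\<^sub>v v"
        unfolding eigs_on_def by blast
      have vc: "v \<in> carrier_vec n" using v TS(1) csubspace_carrier by blast
      have v0: "v \<noteq> 0\<^sub>v n" using v0' vc by simp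
      have "\<exists>j<m. cinner (u j) v \<noteq> 0"
      proof (rule ccontr)
        assume "\<not> (\<exists>j<m. cinner (u j) v \<noteq> 0)"
        hence "lc n m (\<lambda>j. cinner (u j) v) u = 0\<^sub>v n" by (intro lc_zero) auto
        thus False using cpl v v0 unfolding ocomplete_def by auto
      qed
      then obtain j where j: "j < m" and cj: "cinner (u j) v \<noteq> 0" by blast
      have "complex_of_real l * cinner (u j) v = cinner (u j) (G *\<^sub>v v)"
        using Gv uc[OF j] vc by (simp add: cinner_smult_right[of _ n])
      also have "\<dots> = cinner (G *\<^sub>v u j) v" using cinner_herm[OF Gc Gh uc[OF j] vc] .
      also have "\<dots> = complex_of_real (e j) * cinner (u j) v"
        using eig j uc[OF j] by (simp add: cinner_smult_left[of _ n])
      finally have "l = e j" using cj by simp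
      thus "l \<in> e ` {..<m}" using j by blast
    qed
  qed
  define lmin where "lmin = Min (eigs_on T G)"
  define lmax where "lmax = Max (eigs_on T G)"
  have fin: "finite (e ` {..<m})" and nem: "e ` {..<m} \<noteq> {}" using m0 by auto
  have lmin_le: "lmin \<le> e j" and le_lmax: "e j \<le> lmax" if "j < m" for j
    using that fin by (auto simp: lmin_def lmax_def eigs intro!: Min_le Max_ge)
  obtain jmin where jmin: "jmin < m" "e jmin = lmin"
    using Min_in[OF fin nem] by (auto simp: lmin_def eigs)
  obtain jmax where jmax: "jmax < m" "e jmax = lmax"
    using Max_in[OF fin nem] by (auto simp: lmax_def eigs)
  have trf: "mtrace (Q * kraus_map n Ms \<rho>) = (\<Sum>j<m. complex_of_real (e j) * cinner (u j) (\<rho> *\<^sub>v u j))"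
    if r: "\<rho> \<in> carrier_mat n n" and rP: "P * \<rho> * P = \<rho>" for \<rho>
  proof -
    have kc: "\<And>M. M \<in> set Ms \<Longrightarrow> M * \<rho> * adj M \<in> carrier_mat n n" using Ms r by simp
    have "mtrace (Q * kraus_map n Ms \<rho>) = (\<Sum>M\<leftarrow>Ms. mtrace (Q * (M * \<rho> * adj M)))"
      unfolding kraus_map_def by (rule foldr_trace_left[OF kc Qc])
    also have "\<dots> = (\<Sum>M\<leftarrow>Ms. mtrace (f M * \<rho>))"
      using trace_M[OF Qc Pc Ms r QQ aQ aP rP] by (intro arg_cong[where f = sum_list] map_cong) (auto simp: f_def N_def)
    also have "\<dots> = mtrace (G * \<rho>)" unfolding G' by (rule foldr_trace_right[OF fc r, symmetric])
    also have "\<dots> = mtrace (\<rho> * G)" by (rule mtrace_comm[OF Gc r])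
    also have "\<rho> * G = \<rho> * G * P" using GP Gc Pc r by (simp add: assoc_mult_mat[of \<rho> n n G n P n])
    also have "mtrace (\<rho> * G * P) = (\<Sum>j<m. cinner (u j) ((\<rho> * G) *\<^sub>v u j))"
      unfolding Pm by (rule trace_pmat[OF _ uc]) (use r Gc in simp)
    also have "\<dots> = (\<Sum>j<m. complex_of_real (e j) * cinner (u j) (\<rho> *\<^sub>v u j))"
    proof (rule sum.cong[OF refl])
      fix j assume "j \<in> {..<m}"
      hence j: "j < m" by simp
      have "(\<rho> * G) *\<^sub>v u j = \<rho> *\<^sub>v (complex_of_real (e j) \<cdot>\<^sub>v u j)"
        using r Gc uc[OF j] eig j by (simp add: assoc_mult_mat_vec[of \<rho> n n G n "u j"])
      also have "\<dots> = complex_of_real (e j) \<cdot>\<^sub>v (\<rho> *\<^sub>v u j)" using r uc[OF j] by (simp add: mult_mat_vec)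
      finally show "cinner (u j) ((\<rho> * G) *\<^sub>v u j) = complex_of_real (e j) * cinner (u j) (\<rho> *\<^sub>v u j)"
        using r uc[OF j] by (simp add: cinner_smult_right[of _ n])
    qed
    finally show ?thesis .
  qed
  have trr: "mtrace \<rho> = (\<Sum>j<m. cinner (u j) (\<rho> *\<^sub>v u j))"
    if r: "\<rho> \<in> carrier_mat n n" and rP: "P * \<rho> * P = \<rho>" for \<rho>
  proof -
    have "\<rho> * P = P * \<rho> * (P * P)" using rP Pc r by (metis assoc_mult_mat mult_carrier_nn)
    hence "\<rho> * P = \<rho>" using PP rP by simp
    hence "mtrace \<rho> = mtrace (\<rho> * pmat n m u)" using Pm by simp
    also have "\<dots> = (\<Sum>j<m. cinner (u j) (\<rho> *\<^sub>v u j))" by (rule trace_pmat[OF r uc])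
    finally show ?thesis .
  qed
  have bounds: "Im (mtrace (Q * kraus_map n Ms \<rho>)) = 0 \<and> lmin \<le> Re (mtrace (Q * kraus_map n Ms \<rho>))
     \<and> Re (mtrace (Q * kraus_map n Ms \<rho>)) \<le> lmax"
    if d: "density n \<rho>" and rP: "P * \<rho> * P = \<rho>" for \<rho>
  proof -
    have r: "\<rho> \<in> carrier_mat n n" using d by (simp add: density_def psd_def)
    define rr where "rr = (\<lambda>j. cinner (u j) (\<rho> *\<^sub>v u j))"
    have rrIm: "Im (rr j) = 0" and rrRe: "Re (rr j) \<ge> 0" if "j < m" for j
      using d uc[OF that] by (auto simp: density_def psd_def rr_def)
    have sum1: "(\<Sum>j<m. Re (rr j)) = 1"
    proof -
      have "mtrace \<rho> = 1" using d by (simp add: density_def)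
      hence "Re (\<Sum>j<m. rr j) = 1" using trr[OF r rP] by (simp add: rr_def)
      thus ?thesis by simp
    qed
    have tr: "mtrace (Q * kraus_map n Ms \<rho>) = (\<Sum>j<m. complex_of_real (e j) * rr j)"
      using trf[OF r rP] by (simp add: rr_def)
    have im: "Im (mtrace (Q * kraus_map n Ms \<rho>)) = 0" unfolding tr using rrIm by simp
    have re: "Re (mtrace (Q * kraus_map n Ms \<rho>)) = (\<Sum>j<m. e j * Re (rr j))" unfolding tr using rrIm by simp
    have "lmin = (\<Sum>j<m. lmin * Re (rr j))" using sum1 by (simp add: sum_distrib_left[symmetric])
    also have "\<dots> \<le> (\<Sum>j<m. e j * Re (rr j))" using lmin_le rrRe by (intro sum_mono mult_right_mono) auto
    finally have l1: "lmin \<le> Re (mtrace (Q * kraus_map n Ms \<rho>))" using re by simp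
    have "(\<Sum>j<m. e j * Re (rr j)) \<le> (\<Sum>j<m. lmax * Re (rr j))" using le_lmax rrRe by (intro sum_mono mult_right_mono) auto
    also have "\<dots> = lmax" using sum1 by (simp add: sum_distrib_left[symmetric])
    finally have l2: "Re (mtrace (Q * kraus_map n Ms \<rho>)) \<le> lmax" using re by simp
    show ?thesis using im l1 l2 by simp
  qed
  have e_le1: "e j \<le> 1" if j: "j < m" for j
  proof -
    let ?u = "u j"
    have ucj: "?u \<in> carrier_vec n" using uc[OF j] .
    have "e j = Re (cinner ?u (G *\<^sub>v ?u))"
      using eig j ucj ortho_inner[OF o j j] by (simp add: cinner_smult_right[of _ n])
    also have "\<dots> = (\<Sum>M\<leftarrow>Ms. Re (cinner (N M *\<^sub>v ?u) (N M *\<^sub>v ?u)))"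
      unfolding Gquad[OF ucj] Re_sum_list ..
    also have "\<dots> \<le> (\<Sum>M\<leftarrow>Ms. Re (cinner (M *\<^sub>v ?u) (M *\<^sub>v ?u)))"
    proof (rule sum_list_mono)
      fix M assume M: "M \<in> set Ms"
      show "Re (cinner (N M *\<^sub>v ?u) (N M *\<^sub>v ?u)) \<le> Re (cinner (M *\<^sub>v ?u) (M *\<^sub>v ?u))"
        unfolding NT[OF M uT[OF j]] Q_def using proj_norm_le[OF TS(2)] Ms[OF M] ucj by simp
    qed
    also have "\<dots> = Re (cinner ?u (foldr (\<lambda>M acc. adj M * M + acc) Ms (0\<^sub>m n n) *\<^sub>v ?u))"
    proof -
      have ac: "\<And>M. M \<in> set Ms \<Longrightarrow> adj M * M \<in> carrier_mat n n" using Ms by simp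
      have "cinner ?u (foldr (\<lambda>M acc. adj M * M + acc) Ms (0\<^sub>m n n) *\<^sub>v ?u) = (\<Sum>M\<leftarrow>Ms. cinner ?u ((adj M * M) *\<^sub>v ?u))"
        by (rule foldr_cinner[OF ac ucj])
      also have "\<dots> = (\<Sum>M\<leftarrow>Ms. cinner (M *\<^sub>v ?u) (M *\<^sub>v ?u))"
      proof (intro arg_cong[where f = sum_list] map_cong refl)
        fix M assume M: "M \<in> set Ms"
        have "cinner ?u ((adj M * M) *\<^sub>v ?u) = cinner ?u (adj M *\<^sub>v (M *\<^sub>v ?u))"
          using Ms[OF M] ucj by (simp add: assoc_mult_mat_vec[of "adj M" n n M n ?u])
        also have "\<dots> = cinner (M *\<^sub>v ?u) (M *\<^sub>v ?u)"
          using cinner_adj[of "adj M" n ?u "M *\<^sub>v ?u"] Ms[OF M] ucj by simp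
        finally show "cinner ?u ((adj M * M) *\<^sub>v ?u) = cinner (M *\<^sub>v ?u) (M *\<^sub>v ?u)" .
      qed
      finally show ?thesis by (simp add: Re_sum_list)
    qed
    also have "\<dots> = 1" using KK ucj ortho_inner[OF o j j] by simp
    finally show ?thesis .
  qed
  have lmax1: "lmax \<le> 1" using e_le1[OF jmax(1)] jmax(2) by simp
  have attain: "\<exists>\<rho>. density n \<rho> \<and> P * \<rho> * P = \<rho> \<and> mtrace (Q * kraus_map n Ms \<rho>) = complex_of_real (e j)"
    if j: "j < m" for j
  proof -
    let ?r = "rk n (u j)"
    have ucj: "u j \<in> carrier_vec n" using uc[OF j] .
    have d: "density n ?r" using rk_density[OF ucj] ortho_inner[OF o j j] by simp
    have Puj: "P *\<^sub>v u j = u j" using proj_fix[OF TS(1) uT[OF j]] by (simp add: P_def)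
    have rP: "P * ?r * P = ?r"
    proof (rule mat_eq_by_vec[of _ n])
      fix x :: "complex vec" assume x: "x \<in> carrier_vec n"
      have Px: "P *\<^sub>v x \<in> carrier_vec n" using Pc x by simp
      have "(P * ?r * P) *\<^sub>v x = (P * ?r) *\<^sub>v (P *\<^sub>v x)"
        using Pc x by (simp add: assoc_mult_mat_vec[of "P * ?r" n n P n x])
      also have "\<dots> = P *\<^sub>v (?r *\<^sub>v (P *\<^sub>v x))"
        using Pc Px by (simp add: assoc_mult_mat_vec[of P n n ?r n "P *\<^sub>v x"])
      also have "\<dots> = P *\<^sub>v (cinner (u j) (P *\<^sub>v x) \<cdot>\<^sub>v u j)" using rk_mult_vec[OF ucj Px] by simp
      also have "\<dots> = cinner (u j) (P *\<^sub>v x) \<cdot>\<^sub>v u j" using Pc ucj Puj by (simp add: mult_mat_vec)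
      also have "cinner (u j) (P *\<^sub>v x) = cinner (u j) x"
        using cinner_herm[OF Pc aP ucj x] Puj by simp
      also have "cinner (u j) x \<cdot>\<^sub>v u j = ?r *\<^sub>v x" using rk_mult_vec[OF ucj x] by simp
      finally show "(P * ?r * P) *\<^sub>v x = ?r *\<^sub>v x" .
    qed (use Pc in simp_all)
    have "mtrace (Q * kraus_map n Ms ?r) = (\<Sum>k<m. complex_of_real (e k) * cinner (u k) (?r *\<^sub>v u k))"
      by (rule trf[OF rk_carrier rP])
    also have "\<dots> = (\<Sum>k<m. complex_of_real (e k) * (if k = j then 1 else 0))"
    proof (rule sum.cong[OF refl])
      fix k assume "k \<in> {..<m}"
      hence k: "k < m" by simp
      have "cinner (u k) (?r *\<^sub>v u k) = cinner (u j) (u k) * cinner (u k) (u j)"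
        using rk_mult_vec[OF ucj uc[OF k]] uc[OF k] ucj by (simp add: cinner_smult_right[of _ n])
      also have "\<dots> = (if k = j then 1 else 0)" using ortho_inner[OF o] j k by auto
      finally show "complex_of_real (e k) * cinner (u k) (?r *\<^sub>v u k) = complex_of_real (e k) * (if k = j then 1 else 0)"
        by simp
    qed
    also have "\<dots> = complex_of_real (e j)" using j by (simp add: if_distrib cong: if_cong)
    finally show ?thesis using d rP by blast
  qed
  have final: "pos_def_on T G \<and>
     (\<forall>\<rho>. density n \<rho> \<and> P * \<rho> * P = \<rho> \<longrightarrow>
            Im (mtrace (Q * kraus_map n Ms \<rho>)) = 0 \<and> lmin \<le> Re (mtrace (Q * kraus_map n Ms \<rho>))
             \<and> Re (mtrace (Q * kraus_map n Ms \<rho>)) \<le> lmax)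
        \<and> lmax \<le> 1
        \<and> (\<exists>\<rho>. density n \<rho> \<and> P * \<rho> * P = \<rho> \<and> mtrace (Q * kraus_map n Ms \<rho>) = complex_of_real lmin)
        \<and> (\<exists>\<rho>. density n \<rho> \<and> P * \<rho> * P = \<rho> \<and> mtrace (Q * kraus_map n Ms \<rho>) = complex_of_real lmax)"
    using posdef bounds lmax1 attain[OF jmin(1)] attain[OF jmax(1)] jmin(2) jmax(2) by auto
  show ?thesis unfolding Let_def
    using final unfolding T_def T0_def P_def Q_def G_def lmin_def lmax_def .
qed


end
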